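(* Under the assumptions and notation of the EM recursion (regular conditional distributions $P_{Y|X}$, $P_{X|Y}$ exist; $h>0$ a $P_X$-density of a probability measure $Q^\ast_X$; $g_0>0$ a $P_Y$-density; $q^{(n)}_{Y|X=x}(y)=g_n(y)/\int g_n(z)P_{Y|X=x}(dz)$ and $g_{n+1}(y)=\int q^{(n)}_{Y|X=x}(y)h(x)P_{X|Y=y}(dx)$; $h_n=E_P[g_n(Y)\mid X=\cdot]$; with all integrals in the Kullback–Leibler comparison finite), suppose in addition that $\lim_n g_n(y)=g(y)>0$ exists for $P_Y$-a.e. $y$, that $\lim_n q^{(n)}_{Y|X=x}(y)=q_{Y|X=x}(y)>0$ exists for $P$-a.e. $(x,y)$, that $\int g\,dP_Y=1$, and that $$\lim_n\int g_n(z)P_{Y|X=x}(dz)=\int g(z)P_{Y|X=x}(dz)\ \ P_X\text{-a.s.},\qquad \lim_n\int q^{(n)}_{Y|X=x}(y)h(x)P_{X|Y=y}(dx)=\int q_{Y|X=x}(y)h(x)P_{X|Y=y}(dx)\ \ P_Y\text{-a.s.}$$ Then: (i) $g$ is a density w.r.t. $P_Y$; the distribution $\widehat Q$ with $\frac{d\widehat Q}{dP}=g(Y)$ is related to $P$ through label shift with $\frac{d\widehat Q_Y}{dP_Y}=g$, and with $\widehat h(x)=E_P[g(Y)\mid X=x]$ one has $\mathrm{KL}_{P_X}(h\|\widehat h)\le\inf_n\mathrm{KL}_{P_X}(h\|h_n)$. (ii) $g$ solves $1=\int\frac{h(x)}{\int g(z)P_{Y|X=x}(dz)}P_{X|Y=y}(dx)$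 for $P_Y$-a.e. $y$. Defining $f(x,y)=\frac{g(y)\,h(x)}{\int g(z)P_{Y|X=x}(dz)}$ ($P$-a.s.), $f$ is a density w.r.t. $P$, the distribution $Q$ with $\frac{dQ}{dP}=f$ is related to $P$ through FJS, $Q_X=Q_X^\ast$, and $\frac{dQ_Y}{dP_Y}=g$.
   Context: Setting: $(\Omega_X,\mathcal H)$ and $(\Omega_Y,\mathcal G)$ are measurable spaces, $\Omega=\Omega_X\times\Omega_Y$, $\mathcal F=\mathcal H\otimes\mathcal G$, and $X,Y$ are the coordinate projections. $P$ is a probability measure on $(\Omega,\mathcal F)$ with marginals $P_X,P_Y$. Regular conditional distributions $P_{Y|X}$, $P_{X|Y}$: maps $(x,G)\mapsto P_{Y|X=x}[G]$ measurable in $x$, probability measures in $G$, with $P[Y\in G\mid X=x]=P_{Y|X=x}[G]$ $P_X$-a.s. for every $G$ (and analogously). Label shift between $P$ and $\widehat Q$: $P[X\in H\mid Y=\cdot]=\widehat Q[X\in H\mid Y=\cdot]$ a.s. for all $H$. FJS between $P$ and $Q$: $\frac{dQ}{dP}=\hbar(X)\overline g(Y)$ for measurable $\hbar,\overline g\ge0$. $\mathrm{KL}_\mu(\lambda_0\|\lambda_1)=\int\lambda_0\log(\lambda_0/\lambda_1)\,d\mu$ for probability densities $\lambda_0,\lambda_1$ w.r.t. $\mu$ that are $\mu$-a.s. positive and with $\int\lambda_0|\log(\lambda_0/\lambda_1)|d\mu<\infty$. *)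

theory Defs
  imports "HOL-Probability.Probability"
begin

text \<open>sigma-algebras generated by the coordinate projections X = fst, Y = snd on Omega\<close>
definition sigX :: "('a \<times> 'b) measure \<Rightarrow> 'a measure \<Rightarrow> ('a \<times> 'b) measure" where
  "sigX P MX = vimage_algebra (space P) fst MX"

definition sigY :: "('a \<times> 'b) measure \<Rightarrow> 'b measure \<Rightarrow> ('a \<times> 'b) measure" where
  "sigY P MY = vimage_algebra (space P) snd MY"

text \<open>K is a regular conditional distribution of Y given X under P:
  x \<mapsto> K x G measurable, K x a probability measure on MY, and
  P[Y \<in> G | X = x] = K x G for P_X-a.e. x (conditional probability = conditional
  expectation of the indicator given sigma(X)).\<close>
definition reg_cond_YX :: "'a measure \<Rightarrow> 'b measure \<Rightarrow> ('a \<times> 'b) measure \<Rightarrow> ('a \<Rightarrow> 'b measure) \<Rightarrow> bool" where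
  "reg_cond_YX MX MY P K \<longleftrightarrow>
     (\<forall>x\<in>space MX. prob_space (K x) \<and> sets (K x) = sets MY) \<and>
     (\<forall>G\<in>sets MY. (\<lambda>x. measure (K x) G) \<in> borel_measurable MX) \<and>
     (\<forall>G\<in>sets MY. AE \<omega> in P.
        real_cond_exp P (sigX P MX) (indicator (space MX \<times> G)) \<omega> = measure (K (fst \<omega>)) G)"

definition reg_cond_XY :: "'a measure \<Rightarrow> 'b measure \<Rightarrow> ('a \<times> 'b) measure \<Rightarrow> ('b \<Rightarrow> 'a measure) \<Rightarrow> bool" where
  "reg_cond_XY MX MY P K \<longleftrightarrow>
     (\<forall>y\<in>space MY. prob_space (K y) \<and> sets (K y) = sets MX) \<and>
     (\<forall>H\<in>sets MX. (\<lambda>y. measure (K y) H) \<in> borel_measurable MY) \<and>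
     (\<forall>H\<in>sets MX. AE \<omega> in P.
        real_cond_exp P (sigY P MY) (indicator (H \<times> space MY)) \<omega> = measure (K (snd \<omega>)) H)"

definition prob_density :: "'a measure \<Rightarrow> ('a \<Rightarrow> real) \<Rightarrow> bool" where
  "prob_density M f \<longleftrightarrow> f \<in> borel_measurable M \<and> (AE x in M. 0 \<le> f x) \<and>
     integrable M f \<and> (\<integral>x. f x \<partial>M) = 1"

definition label_shift :: "'a measure \<Rightarrow> 'b measure \<Rightarrow> ('a \<times> 'b) measure \<Rightarrow> ('a \<times> 'b) measure \<Rightarrow> bool" where
  "label_shift MX MY P Q \<longleftrightarrow>
     (\<forall>H\<in>sets MX. AE \<omega> in P.
        real_cond_exp P (sigY P MY) (indicator (H \<times> space MY)) \<omega> =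
        real_cond_exp Q (sigY Q MY) (indicator (H \<times> space MY)) \<omega>)"

definition FJS :: "'a measure \<Rightarrow> 'b measure \<Rightarrow> ('a \<times> 'b) measure \<Rightarrow> ('a \<times> 'b) measure \<Rightarrow> bool" where
  "FJS MX MY P Q \<longleftrightarrow>
     (\<exists>hb gb. hb \<in> borel_measurable MX \<and> gb \<in> borel_measurable MY \<and>
        (\<forall>x\<in>space MX. 0 \<le> hb x) \<and> (\<forall>y\<in>space MY. 0 \<le> gb y) \<and>
        Q = density P (\<lambda>\<omega>. ennreal (hb (fst \<omega>) * gb (snd \<omega>))))"

definition KL :: "'a measure \<Rightarrow> ('a \<Rightarrow> real) \<Rightarrow> ('a \<Rightarrow> real) \<Rightarrow> real" where
  "KL \<mu> l0 l1 = (\<integral>x. l0 x * ln (l0 x / l1 x) \<partial>\<mu>)"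

definition KL_wd :: "'a measure \<Rightarrow> ('a \<Rightarrow> real) \<Rightarrow> ('a \<Rightarrow> real) \<Rightarrow> bool" where
  "KL_wd \<mu> l0 l1 \<longleftrightarrow> prob_density \<mu> l0 \<and> prob_density \<mu> l1 \<and>
     (AE x in \<mu>. 0 < l0 x \<and> 0 < l1 x) \<and>
     integrable \<mu> (\<lambda>x. l0 x * \<bar>ln (l0 x / l1 x)\<bar>)"

definition EM_q :: "('a \<Rightarrow> 'b measure) \<Rightarrow> (nat \<Rightarrow> 'b \<Rightarrow> real) \<Rightarrow> nat \<Rightarrow> 'a \<Rightarrow> 'b \<Rightarrow> real" where
  "EM_q KYX gs n x y = gs n y / (\<integral>z. gs n z \<partial>KYX x)"

end

theory Submission
  imports Defs
begin


lemma disint_eq: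
  fixes P :: "('a \<times> 'b) measure"
  assumes P: "prob_space P" "sets P = sets (MX \<Otimes>\<^sub>M MY)"
   and K: "K \<in> MX \<rightarrow>\<^sub>M subprob_algebra MY"
   and rect: "\<And>A B. A \<in> sets MX \<Longrightarrow> B \<in> sets MY \<Longrightarrow>
      emeasure P (A \<times> B) = (\<integral>\<^sup>+x. indicator A x * emeasure (K x) B \<partial>distr P MX fst)"
  shows "P = distr P MX fst \<bind> (\<lambda>x. distr (K x) (MX \<Otimes>\<^sub>M MY) (Pair x))"
proof -
  interpret prob_space P by fact
  have sK: "x \<in> space MX \<Longrightarrow> sets (K x) = sets MY" for x
    using K by (rule subprob_measurableD(2))
  have spK: "x \<in> space MX \<Longrightarrow> space (K x) = space MY" for x
    using sK sets_eq_imp_space_eq by blast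
  have Km: "(\<lambda>x. distr (K x) (MX \<Otimes>\<^sub>M MY) (Pair x)) \<in> MX \<rightarrow>\<^sub>M subprob_algebra (MX \<Otimes>\<^sub>M MY)"
    by (rule measurable_distr2[OF _ K]) simp
  have Km': "(\<lambda>x. distr (K x) (MX \<Otimes>\<^sub>M MY) (Pair x)) \<in> distr P MX fst \<rightarrow>\<^sub>M subprob_algebra (MX \<Otimes>\<^sub>M MY)"
    by (subst measurable_cong_sets[OF sets_distr refl]) (rule Km)
  have spP: "space P = space MX \<times> space MY"
    using sets_eq_imp_space_eq[OF P(2)] by (simp add: space_pair_measure)
  have ne: "space (distr P MX fst) \<noteq> {}"
    using not_empty spP by auto
  have fstm: "fst \<in> P \<rightarrow>\<^sub>M MX"
    using P(2) measurable_cong_sets measurable_fst by blast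
  show ?thesis
  proof (rule measure_eqI_generator_eq[OF Int_stable_pair_measure_generator[of MX MY], where \<Omega>="space MX \<times> space MY" and A="\<lambda>_. space MX \<times> space MY"])
    show "{a \<times> b |a b. a \<in> sets MX \<and> b \<in> sets MY} \<subseteq> Pow (space MX \<times> space MY)"
      by (auto dest: sets.sets_into_space)
    show "sets P = sigma_sets (space MX \<times> space MY) {a \<times> b |a b. a \<in> sets MX \<and> b \<in> sets MY}"
      using P(2) sets_pair_measure by simp
    show "sets (distr P MX fst \<bind> (\<lambda>x. distr (K x) (MX \<Otimes>\<^sub>M MY) (Pair x))) =
        sigma_sets (space MX \<times> space MY) {a \<times> b |a b. a \<in> sets MX \<and> b \<in> sets MY}"
      using ne by (subst sets_bind[where N="MX \<Otimes>\<^sub>M MY"]) (auto simp: sets_pair_measure)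
    show "range (\<lambda>_. space MX \<times> space MY) \<subseteq> {a \<times> b |a b. a \<in> sets MX \<and> b \<in> sets MY}"
      by auto
    show "(\<Union>i. space MX \<times> space MY) = space MX \<times> space MY" by simp
    show "emeasure P (space MX \<times> space MY) \<noteq> \<infinity>" for i::nat by simp
  next
    fix X assume "X \<in> {a \<times> b |a b. a \<in> sets MX \<and> b \<in> sets MY}"
    then obtain A B where X: "X = A \<times> B" and A: "A \<in> sets MX" and B: "B \<in> sets MY" by auto
    have "emeasure (distr P MX fst \<bind> (\<lambda>x. distr (K x) (MX \<Otimes>\<^sub>M MY) (Pair x))) X
        = (\<integral>\<^sup>+x. emeasure (distr (K x) (MX \<Otimes>\<^sub>M MY) (Pair x)) X \<partial>distr P MX fst)"
      using X A B by (intro emeasure_bind[OF ne Km']) auto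
    also have "\<dots> = (\<integral>\<^sup>+x. indicator A x * emeasure (K x) B \<partial>distr P MX fst)"
    proof (rule nn_integral_cong)
      fix x assume "x \<in> space (distr P MX fst)"
      then have x: "x \<in> space MX" by simp
      have pm: "Pair x \<in> K x \<rightarrow>\<^sub>M MX \<Otimes>\<^sub>M MY"
        by (subst measurable_cong_sets[OF sK[OF x] refl]) (rule measurable_Pair1'[OF x])
      have "emeasure (distr (K x) (MX \<Otimes>\<^sub>M MY) (Pair x)) X = emeasure (K x) (Pair x -` X \<inter> space (K x))"
        using X A B by (intro emeasure_distr[OF pm]) auto
      also have "Pair x -` X \<inter> space (K x) = (if x \<in> A then B else {})"
        using X spK[OF x] sets.sets_into_space[OF B] by auto
      finally show "emeasure (distr (K x) (MX \<Otimes>\<^sub>M MY) (Pair x)) X = indicator A x * emeasure (K x) B"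
        by (simp split: split_indicator)
    qed
    finally show "emeasure P X = emeasure (distr P MX fst \<bind> (\<lambda>x. distr (K x) (MX \<Otimes>\<^sub>M MY) (Pair x))) X"
      using rect[OF A B] X by simp
  qed
qed

lemma disint_nn:
  fixes P :: "('a \<times> 'b) measure"
  assumes P: "prob_space P" "sets P = sets (MX \<Otimes>\<^sub>M MY)"
   and K: "K \<in> MX \<rightarrow>\<^sub>M subprob_algebra MY"
   and rect: "\<And>A B. A \<in> sets MX \<Longrightarrow> B \<in> sets MY \<Longrightarrow>
      emeasure P (A \<times> B) = (\<integral>\<^sup>+x. indicator A x * emeasure (K x) B \<partial>distr P MX fst)"
   and F: "F \<in> borel_measurable (MX \<Otimes>\<^sub>M MY)"
  shows "(\<integral>\<^sup>+\<omega>. F \<omega> \<partial>P) = (\<integral>\<^sup>+x. \<integral>\<^sup>+y. F (x,y) \<partial>K x \<partial>distr P MX fst)"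
proof -
  have sK: "x \<in> space MX \<Longrightarrow> sets (K x) = sets MY" for x
    using K by (rule subprob_measurableD(2))
  have Km: "(\<lambda>x. distr (K x) (MX \<Otimes>\<^sub>M MY) (Pair x)) \<in> MX \<rightarrow>\<^sub>M subprob_algebra (MX \<Otimes>\<^sub>M MY)"
    by (rule measurable_distr2[OF _ K]) simp
  have Km': "(\<lambda>x. distr (K x) (MX \<Otimes>\<^sub>M MY) (Pair x)) \<in> distr P MX fst \<rightarrow>\<^sub>M subprob_algebra (MX \<Otimes>\<^sub>M MY)"
    by (subst measurable_cong_sets[OF sets_distr refl]) (rule Km)
  have E: "P = distr P MX fst \<bind> (\<lambda>x. distr (K x) (MX \<Otimes>\<^sub>M MY) (Pair x))"
    by (rule disint_eq[OF P K rect])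
  have "(\<integral>\<^sup>+\<omega>. F \<omega> \<partial>P) = (\<integral>\<^sup>+\<omega>. F \<omega> \<partial>(distr P MX fst \<bind> (\<lambda>x. distr (K x) (MX \<Otimes>\<^sub>M MY) (Pair x))))"
    by (rule arg_cong[where f="\<lambda>M. \<integral>\<^sup>+\<omega>. F \<omega> \<partial>M", OF E])
  also have "\<dots> = (\<integral>\<^sup>+x. \<integral>\<^sup>+\<omega>. F \<omega> \<partial>distr (K x) (MX \<Otimes>\<^sub>M MY) (Pair x) \<partial>distr P MX fst)"
    by (rule nn_integral_bind[OF F Km'])
  also have "\<dots> = (\<integral>\<^sup>+x. \<integral>\<^sup>+y. F (x,y) \<partial>K x \<partial>distr P MX fst)"
  proof (rule nn_integral_cong)
    fix x assume "x \<in> space (distr P MX fst)"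
    then have x: "x \<in> space MX" by simp
    have pm: "Pair x \<in> K x \<rightarrow>\<^sub>M MX \<Otimes>\<^sub>M MY"
      by (subst measurable_cong_sets[OF sK[OF x] refl]) (rule measurable_Pair1'[OF x])
    show "(\<integral>\<^sup>+\<omega>. F \<omega> \<partial>distr (K x) (MX \<Otimes>\<^sub>M MY) (Pair x)) = (\<integral>\<^sup>+y. F (x,y) \<partial>K x)"
      using F by (subst nn_integral_distr[OF pm]) simp_all
  qed
  finally show ?thesis .
qed

lemma disint_AE:
  fixes P :: "('a \<times> 'b) measure"
  assumes P: "prob_space P" "sets P = sets (MX \<Otimes>\<^sub>M MY)"
   and K: "K \<in> MX \<rightarrow>\<^sub>M subprob_algebra MY"
   and rect: "\<And>A B. A \<in> sets MX \<Longrightarrow> B \<in> sets MY \<Longrightarrow>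
      emeasure P (A \<times> B) = (\<integral>\<^sup>+x. indicator A x * emeasure (K x) B \<partial>distr P MX fst)"
   and Q: "AE \<omega> in P. Q \<omega>"
  shows "AE x in distr P MX fst. AE y in K x. Q (x,y)"
proof -
  have sK: "x \<in> space MX \<Longrightarrow> sets (K x) = sets MY" for x
    using K by (rule subprob_measurableD(2))
  have spK: "x \<in> space MX \<Longrightarrow> space (K x) = space MY" for x
    using sK sets_eq_imp_space_eq by blast
  have spP: "space P = space MX \<times> space MY"
    using sets_eq_imp_space_eq[OF P(2)] by (simp add: space_pair_measure)
  from AE_E[OF Q] obtain N where N: "{\<omega>\<in>space P. \<not> Q \<omega>} \<subseteq> N" "emeasure P N = 0" "N \<in> sets P"
    by blast
  have NS: "N \<in> sets (MX \<Otimes>\<^sub>M MY)" using N(3) P(2) by simp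
  have Nm: "(\<lambda>\<omega>. indicator N \<omega> :: ennreal) \<in> borel_measurable (MX \<Otimes>\<^sub>M MY)"
    using NS by simp
  have Nm2: "(\<lambda>(x,y). indicator N (x,y) :: ennreal) \<in> borel_measurable (MX \<Otimes>\<^sub>M MY)"
    using Nm by simp
  have "0 = emeasure P N" using N(2) by simp
  also have "\<dots> = (\<integral>\<^sup>+\<omega>. indicator N \<omega> \<partial>P)" using N(3) by simp
  also have "\<dots> = (\<integral>\<^sup>+x. \<integral>\<^sup>+y. indicator N (x,y) \<partial>K x \<partial>distr P MX fst)"
    by (rule disint_nn[OF P K rect Nm])
  finally have z: "(\<integral>\<^sup>+x. \<integral>\<^sup>+y. indicator N (x,y) \<partial>K x \<partial>distr P MX fst) = 0" by simp
  have im: "(\<lambda>x. \<integral>\<^sup>+y. indicator N (x,y) \<partial>K x) \<in> borel_measurable MX"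
    using nn_integral_measurable_subprob_algebra2[OF Nm2 K] by simp
  have im': "(\<lambda>x. \<integral>\<^sup>+y. indicator N (x,y) \<partial>K x) \<in> borel_measurable (distr P MX fst)"
    by (subst measurable_cong_sets[OF sets_distr refl]) (rule im)
  have "AE x in distr P MX fst. (\<integral>\<^sup>+y. indicator N (x,y) \<partial>K x) = 0"
    using z nn_integral_0_iff_AE[OF im'] by simp
  moreover have "AE x in distr P MX fst. x \<in> space MX" by (rule AE_I2) simp
  ultimately show ?thesis
  proof eventually_elim
    case (elim x)
    have pm: "Pair x \<in> K x \<rightarrow>\<^sub>M MX \<Otimes>\<^sub>M MY"
      using elim by (subst measurable_cong_sets[OF sK refl]) (auto intro: measurable_Pair1')
    have m2: "(\<lambda>y. indicator N (x,y) :: ennreal) \<in> borel_measurable (K x)"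
      using measurable_comp[OF pm Nm] by (simp add: comp_def)
    have "AE y in K x. (indicator N (x,y) :: ennreal) = 0"
      using elim(1) nn_integral_0_iff_AE[OF m2] by simp
    moreover have "AE y in K x. y \<in> space MY" using elim(2) spK by (intro AE_I2) auto
    ultimately show ?case
    proof eventually_elim
      case (elim y)
      then have "(x,y) \<notin> N" by (simp split: split_indicator_asm)
      moreover have "(x,y) \<in> space P" using elim \<open>x \<in> space MX\<close> spP by auto
      ultimately show "Q (x,y)" using N(1) by blast
    qed
  qed
qed

lemma pemeq: "prob_space M \<Longrightarrow> emeasure M A = ennreal (measure M A)"
  by (metis prob_space.axioms(1) finite_measure.emeasure_eq_measure)

lemma kernel_meas:
  assumes "\<forall>x\<in>space M1. prob_space (K x) \<and> sets (K x) = sets M2"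
    and "\<forall>G\<in>sets M2. (\<lambda>x. measure (K x) G) \<in> borel_measurable M1"
  shows "K \<in> M1 \<rightarrow>\<^sub>M subprob_algebra M2"
proof (rule measurable_subprob_algebra)
  fix a assume "a \<in> space M1"
  then show "subprob_space (K a)" "sets (K a) = sets M2"
    using assms(1) by (auto intro: prob_space_imp_subprob_space)
next
  fix A assume A: "A \<in> sets M2"
  have "(\<lambda>x. ennreal (measure (K x) A)) \<in> borel_measurable M1"
    using assms(2) A by auto
  then show "(\<lambda>a. emeasure (K a) A) \<in> borel_measurable M1"
    by (rule measurable_cong[THEN iffD1, rotated])
       (use assms(1) in \<open>auto simp: pemeq\<close>)
qed

lemma rect_gen:
  fixes P :: "'c measure" and \<pi> :: "'c \<Rightarrow> 'a" and \<sigma> :: "'c \<Rightarrow> 'b"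
  assumes P: "prob_space P" and pim: "\<pi> \<in> P \<rightarrow>\<^sub>M M1" and sim: "\<sigma> \<in> P \<rightarrow>\<^sub>M M2"
    and K1: "\<forall>x\<in>space M1. prob_space (K x) \<and> sets (K x) = sets M2"
    and K2: "\<forall>G\<in>sets M2. (\<lambda>x. measure (K x) G) \<in> borel_measurable M1"
    and K3: "\<forall>G\<in>sets M2. AE \<omega> in P.
        real_cond_exp P (vimage_algebra (space P) \<pi> M1) (indicator (\<sigma> -` G \<inter> space P)) \<omega> = measure (K (\<pi> \<omega>)) G"
    and A: "A \<in> sets M1" and G: "G \<in> sets M2"
  shows "emeasure P (\<pi> -` A \<inter> \<sigma> -` G \<inter> space P) = (\<integral>\<^sup>+x. indicator A x * emeasure (K x) G \<partial>distr P M1 \<pi>)"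
proof -
  interpret prob_space P by fact
  let ?F = "vimage_algebra (space P) \<pi> M1"
  have sub: "subalgebra P ?F"
    unfolding subalgebra_def
  proof
    show "sets ?F \<subseteq> sets P"
      using pim by (subst sets_vimage_algebra2) (auto simp: measurable_def)
  qed simp
  interpret finite_measure_subalgebra P ?F
    by unfold_locales (rule sub)
  define S where "S = \<pi> -` A \<inter> space P"
  define T where "T = \<sigma> -` G \<inter> space P"
  have SF: "S \<in> sets ?F" unfolding S_def using A by (rule in_vimage_algebra)
  have SP: "S \<in> sets P" unfolding S_def using A pim by measurable
  have TP: "T \<in> sets P" unfolding T_def using G sim by measurable
  have Zi: "integrable P (indicator T :: _ \<Rightarrow> real)" by (intro integrable_real_indicator TP) (simp add: less_top[symmetric])
  have km: "(\<lambda>x. measure (K x) G) \<in> borel_measurable M1" using K2 G by auto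
  have kpm: "(\<lambda>\<omega>. measure (K (\<pi> \<omega>)) G) \<in> borel_measurable P"
    using measurable_comp[OF pim km] by (simp add: comp_def)
  have cem: "real_cond_exp P ?F (indicator T) \<in> borel_measurable P"
    by (rule measurable_from_subalg[OF sub borel_measurable_cond_exp])
  have "measure P (S \<inter> T) = (\<integral>x. indicator (S \<inter> T) x \<partial>P)"
    using SP TP by simp
  also have "\<dots> = (\<integral>x\<in>S. indicator T x \<partial>P)"
    unfolding set_lebesgue_integral_def by (intro Bochner_Integration.integral_cong) (auto split: split_indicator)
  also have "\<dots> = (\<integral>x\<in>S. real_cond_exp P ?F (indicator T) x \<partial>P)"
    by (rule real_cond_exp_intA[OF Zi SF])
  also have "\<dots> = (\<integral>x\<in>S. measure (K (\<pi> x)) G \<partial>P)"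
    unfolding set_lebesgue_integral_def
  proof (rule integral_cong_AE)
    show "(\<lambda>x. indicator S x *\<^sub>R real_cond_exp P ?F (indicator T) x) \<in> borel_measurable P"
      using cem SP by measurable
    show "(\<lambda>x. indicator S x *\<^sub>R measure (K (\<pi> x)) G) \<in> borel_measurable P"
      using kpm SP by measurable
    show "AE x in P. indicator S x *\<^sub>R real_cond_exp P ?F (indicator T) x = indicator S x *\<^sub>R measure (K (\<pi> x)) G"
      using K3 G unfolding T_def by auto
  qed
  also have "\<dots> = (\<integral>\<omega>. indicator A (\<pi> \<omega>) * measure (K (\<pi> \<omega>)) G \<partial>P)"
    unfolding set_lebesgue_integral_def S_def
    by (intro Bochner_Integration.integral_cong) (auto split: split_indicator)
  also have "\<dots> = (\<integral>x. indicator A x * measure (K x) G \<partial>distr P M1 \<pi>)"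
    by (intro integral_distr[symmetric] pim borel_measurable_times borel_measurable_indicator A km)
  finally have eq: "measure P (S \<inter> T) = (\<integral>x. indicator A x * measure (K x) G \<partial>distr P M1 \<pi>)" .
  interpret D: prob_space "distr P M1 \<pi>" by (rule prob_space_distr[OF pim])
  have im: "(\<lambda>x. indicator A x * measure (K x) G) \<in> borel_measurable (distr P M1 \<pi>)"
    using A km by (intro borel_measurable_times borel_measurable_indicator) auto
  have int: "integrable (distr P M1 \<pi>) (\<lambda>x. indicator A x * measure (K x) G)"
  proof (rule D.integrable_const_bound[where B=1])
    show "AE x in distr P M1 \<pi>. norm (indicator A x * measure (K x) G) \<le> 1"
    proof (rule AE_I2)
      fix x assume "x \<in> space (distr P M1 \<pi>)"
      then have "prob_space (K x)" using K1 by simp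
      then have "measure (K x) G \<le> 1" "0 \<le> measure (K x) G" by (auto intro: prob_space.prob_le_1)
      then show "norm (indicator A x * measure (K x) G) \<le> 1"
        by (auto split: split_indicator)
    qed
  qed (rule im)
  have "(\<integral>\<^sup>+x. indicator A x * emeasure (K x) G \<partial>distr P M1 \<pi>) =
      (\<integral>\<^sup>+x. ennreal (indicator A x * measure (K x) G) \<partial>distr P M1 \<pi>)"
  proof (rule nn_integral_cong)
    fix x assume "x \<in> space (distr P M1 \<pi>)"
    then have "prob_space (K x)" using K1 by simp
    then show "indicator A x * emeasure (K x) G = ennreal (indicator A x * measure (K x) G)"
      by (auto simp: pemeq split: split_indicator)
  qed
  also have "\<dots> = ennreal (\<integral>x. indicator A x * measure (K x) G \<partial>distr P M1 \<pi>)"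
    by (rule nn_integral_eq_integral[OF int]) (auto simp: measure_nonneg)
  also have "\<dots> = emeasure P (S \<inter> T)"
    using eq SP TP by (simp add: emeasure_eq_measure)
  finally show ?thesis unfolding S_def T_def by (simp add: Int_ac)
qed



locale EMloc =
  fixes MX :: "'a measure" and MY :: "'b measure" and P :: "('a \<times> 'b) measure"
    and KYX :: "'a \<Rightarrow> 'b measure" and KXY :: "'b \<Rightarrow> 'a measure"
    and h :: "'a \<Rightarrow> real" and gs :: "nat \<Rightarrow> 'b \<Rightarrow> real" and hn :: "nat \<Rightarrow> 'a \<Rightarrow> real"
    and g :: "'b \<Rightarrow> real" and q :: "'a \<Rightarrow> 'b \<Rightarrow> real"
    and PX :: "'a measure" and PY :: "'b measure"
  assumes PX_def: "PX = distr P MX fst" and PY_def: "PY = distr P MY snd"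
  and P: "prob_space P" "sets P = sets (MX \<Otimes>\<^sub>M MY)"
    and KYX: "reg_cond_YX MX MY P KYX"
    and KXY: "reg_cond_XY MX MY P KXY"
    and h: "prob_density PX h" "\<forall>x\<in>space MX. 0 < h x"
    and g0: "prob_density PY (gs 0)" "\<forall>y\<in>space MY. 0 < gs 0 y"
    and rec: "\<forall>n. \<forall>y\<in>space MY.
               gs (Suc n) y = (\<integral>x. EM_q KYX gs n x y * h x \<partial>KXY y)"
    and hn: "\<forall>n. hn n \<in> borel_measurable MX \<and>
               (AE \<omega> in P. real_cond_exp P (sigX P MX) (\<lambda>\<omega>. gs n (snd \<omega>)) \<omega> = hn n (fst \<omega>))"
    and KL_fin: "\<forall>n. integrable PX (\<lambda>x. h x * \<bar>ln (h x / hn n x)\<bar>)"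
    and g_lim: "AE y in PY. (\<lambda>n. gs n y) \<longlonglongrightarrow> g y \<and> 0 < g y"
    and q_lim: "AE \<omega> in P. (\<lambda>n. EM_q KYX gs n (fst \<omega>) (snd \<omega>)) \<longlonglongrightarrow> q (fst \<omega>) (snd \<omega>)
                  \<and> 0 < q (fst \<omega>) (snd \<omega>)"
    and g_int: "(\<integral>y. g y \<partial>PY) = 1"
    and lim1: "AE x in PX. (\<lambda>n. \<integral>z. gs n z \<partial>KYX x) \<longlonglongrightarrow> (\<integral>z. g z \<partial>KYX x)"
    and lim2: "AE y in PY. (\<lambda>n. \<integral>x. EM_q KYX gs n x y * h x \<partial>KXY y)
                             \<longlonglongrightarrow> (\<integral>x. q x y * h x \<partial>KXY y)"
begin

interpretation Pp: prob_space P by (rule P(1))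

lemma spP: "space P = space MX \<times> space MY"
  using sets_eq_imp_space_eq[OF P(2)] by (simp add: space_pair_measure)

lemma fstm[measurable]: "fst \<in> P \<rightarrow>\<^sub>M MX"
  by (subst measurable_cong_sets[OF P(2) refl]) simp
lemma sndm[measurable]: "snd \<in> P \<rightarrow>\<^sub>M MY"
  by (subst measurable_cong_sets[OF P(2) refl]) simp

lemma sets_PX[measurable_cong]: "sets PX = sets MX" by (simp add: PX_def)
lemma sets_PY[measurable_cong]: "sets PY = sets MY" by (simp add: PY_def)
lemma space_PX[simp]: "space PX = space MX" by (simp add: PX_def)
lemma space_PY[simp]: "space PY = space MY" by (simp add: PY_def)
lemma prob_PX: "prob_space PX" unfolding PX_def by (rule Pp.prob_space_distr[OF fstm])
lemma prob_PY: "prob_space PY" unfolding PY_def by (rule Pp.prob_space_distr[OF sndm])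

lemma KYX1: "x \<in> space MX \<Longrightarrow> prob_space (KYX x)" "x \<in> space MX \<Longrightarrow> sets (KYX x) = sets MY"
  using KYX unfolding reg_cond_YX_def by auto
lemma KXY1: "y \<in> space MY \<Longrightarrow> prob_space (KXY y)" "y \<in> space MY \<Longrightarrow> sets (KXY y) = sets MX"
  using KXY unfolding reg_cond_XY_def by auto
lemma KYX_space: "x \<in> space MX \<Longrightarrow> space (KYX x) = space MY"
  using KYX1(2) sets_eq_imp_space_eq by blast
lemma KXY_space: "y \<in> space MY \<Longrightarrow> space (KXY y) = space MX"
  using KXY1(2) sets_eq_imp_space_eq by blast

lemma KYXm: "KYX \<in> MX \<rightarrow>\<^sub>M subprob_algebra MY"
  using KYX unfolding reg_cond_YX_def by (intro kernel_meas) auto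
lemma KXYm: "KXY \<in> MY \<rightarrow>\<^sub>M subprob_algebra MX"
  using KXY unfolding reg_cond_XY_def by (intro kernel_meas) auto

lemma rectX: "A \<in> sets MX \<Longrightarrow> B \<in> sets MY \<Longrightarrow>
  emeasure P (A \<times> B) = (\<integral>\<^sup>+x. indicator A x * emeasure (KYX x) B \<partial>distr P MX fst)"
proof -
  assume A: "A \<in> sets MX" and B: "B \<in> sets MY"
  have K3: "\<forall>G\<in>sets MY. AE \<omega> in P.
        real_cond_exp P (vimage_algebra (space P) fst MX) (indicator (snd -` G \<inter> space P)) \<omega> = measure (KYX (fst \<omega>)) G"
  proof
    fix G assume G: "G \<in> sets MY"
    have "snd -` G \<inter> space P = space MX \<times> G"
      using spP sets.sets_into_space[OF G] by auto
    then show "AE \<omega> in P.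
        real_cond_exp P (vimage_algebra (space P) fst MX) (indicator (snd -` G \<inter> space P)) \<omega> = measure (KYX (fst \<omega>)) G"
      using KYX G unfolding reg_cond_YX_def sigX_def by auto
  qed
  have "emeasure P (fst -` A \<inter> snd -` B \<inter> space P) = (\<integral>\<^sup>+x. indicator A x * emeasure (KYX x) B \<partial>distr P MX fst)"
    by (rule rect_gen[OF P(1) fstm sndm _ _ K3 A B]) (use KYX in \<open>auto simp: reg_cond_YX_def\<close>)
  moreover have "fst -` A \<inter> snd -` B \<inter> space P = A \<times> B"
    using spP sets.sets_into_space[OF A] sets.sets_into_space[OF B] by auto
  ultimately show ?thesis by simp
qed

lemma disX_nn: "F \<in> borel_measurable (MX \<Otimes>\<^sub>M MY) \<Longrightarrow>
  (\<integral>\<^sup>+\<omega>. F \<omega> \<partial>P) = (\<integral>\<^sup>+x. \<integral>\<^sup>+y. F (x,y) \<partial>KYX x \<partial>PX)"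
  unfolding PX_def by (rule disint_nn[OF P KYXm rectX])

lemma disX_AE: "AE \<omega> in P. Q \<omega> \<Longrightarrow> AE x in PX. AE y in KYX x. Q (x,y)"
  unfolding PX_def by (rule disint_AE[OF P KYXm rectX])

definition P' where "P' = distr P (MY \<Otimes>\<^sub>M MX) (\<lambda>\<omega>. (snd \<omega>, fst \<omega>))"

lemma swm[measurable]: "(\<lambda>\<omega>. (snd \<omega>, fst \<omega>)) \<in> P \<rightarrow>\<^sub>M MY \<Otimes>\<^sub>M MX"
  by measurable

lemma P': "prob_space P'" "sets P' = sets (MY \<Otimes>\<^sub>M MX)"
  unfolding P'_def by (auto intro: Pp.prob_space_distr)

lemma P'fst: "distr P' MY fst = PY"
  unfolding P'_def PY_def by (subst distr_distr) (auto simp: comp_def)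

lemma rectY: "B \<in> sets MY \<Longrightarrow> A \<in> sets MX \<Longrightarrow>
  emeasure P' (B \<times> A) = (\<integral>\<^sup>+y. indicator B y * emeasure (KXY y) A \<partial>distr P' MY fst)"
proof -
  assume A: "A \<in> sets MX" and B: "B \<in> sets MY"
  have K3: "\<forall>G\<in>sets MX. AE \<omega> in P.
        real_cond_exp P (vimage_algebra (space P) snd MY) (indicator (fst -` G \<inter> space P)) \<omega> = measure (KXY (snd \<omega>)) G"
  proof
    fix G assume G: "G \<in> sets MX"
    have "fst -` G \<inter> space P = G \<times> space MY"
      using spP sets.sets_into_space[OF G] by auto
    then show "AE \<omega> in P.
        real_cond_exp P (vimage_algebra (space P) snd MY) (indicator (fst -` G \<inter> space P)) \<omega> = measure (KXY (snd \<omega>)) G"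
      using KXY G unfolding reg_cond_XY_def sigY_def by auto
  qed
  have "emeasure P (snd -` B \<inter> fst -` A \<inter> space P) = (\<integral>\<^sup>+y. indicator B y * emeasure (KXY y) A \<partial>distr P MY snd)"
    by (rule rect_gen[OF P(1) sndm fstm _ _ K3 B A]) (use KXY in \<open>auto simp: reg_cond_XY_def\<close>)
  moreover have "emeasure P' (B \<times> A) = emeasure P (snd -` B \<inter> fst -` A \<inter> space P)"
    unfolding P'_def using A B by (subst emeasure_distr) (auto intro!: arg_cong[where f="emeasure P"])
  ultimately show ?thesis using P'fst PY_def by simp
qed

lemma disY_nn: "F \<in> borel_measurable (MX \<Otimes>\<^sub>M MY) \<Longrightarrow>
  (\<integral>\<^sup>+\<omega>. F \<omega> \<partial>P) = (\<integral>\<^sup>+y. \<integral>\<^sup>+x. F (x,y) \<partial>KXY y \<partial>PY)"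
proof -
  assume F[measurable]: "F \<in> borel_measurable (MX \<Otimes>\<^sub>M MY)"
  have F': "(\<lambda>\<omega>. F (snd \<omega>, fst \<omega>)) \<in> borel_measurable (MY \<Otimes>\<^sub>M MX)" by measurable
  have "(\<integral>\<^sup>+\<omega>. F \<omega> \<partial>P) = (\<integral>\<^sup>+\<omega>. F (snd \<omega>, fst \<omega>) \<partial>P')"
    unfolding P'_def by (subst nn_integral_distr) (auto simp: F')
  also have "\<dots> = (\<integral>\<^sup>+y. \<integral>\<^sup>+x. F (snd (y,x), fst (y,x)) \<partial>KXY y \<partial>distr P' MY fst)"
    by (rule disint_nn[OF P' KXYm rectY F'])
  also have "\<dots> = (\<integral>\<^sup>+y. \<integral>\<^sup>+x. F (x,y) \<partial>KXY y \<partial>distr P' MY fst)"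
    by simp
  finally show ?thesis using P'fst by simp
qed

lemma disY_AE: "AE \<omega> in P. Q \<omega> \<Longrightarrow> AE y in PY. AE x in KXY y. Q (x,y)"
proof -
  assume Q: "AE \<omega> in P. Q \<omega>"
  have AEP': "AE \<omega> in P'. Q (snd \<omega>, fst \<omega>)"
  proof -
    from AE_E[OF Q] obtain N where N: "{\<omega>\<in>space P. \<not> Q \<omega>} \<subseteq> N" "emeasure P N = 0" "N \<in> sets P"
      by blast
    let ?N' = "(\<lambda>\<omega>. (snd \<omega>, fst \<omega>)) -` N \<inter> space (MY \<Otimes>\<^sub>M MX)"
    have N'S: "?N' \<in> sets (MY \<Otimes>\<^sub>M MX)"
    proof (rule measurable_sets)
      show "(\<lambda>\<omega>. (snd \<omega>, fst \<omega>)) \<in> MY \<Otimes>\<^sub>M MX \<rightarrow>\<^sub>M MX \<Otimes>\<^sub>M MY" by measurable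
      show "N \<in> sets (MX \<Otimes>\<^sub>M MY)" using N(3) P(2) by simp
    qed
    have "emeasure P' ?N' = emeasure P ((\<lambda>\<omega>. (snd \<omega>, fst \<omega>)) -` ?N' \<inter> space P)"
      unfolding P'_def by (rule emeasure_distr[OF swm N'S])
    also have "(\<lambda>\<omega>. (snd \<omega>, fst \<omega>)) -` ?N' \<inter> space P = N"
    proof (intro equalityI subsetI)
      fix \<omega> assume "\<omega> \<in> (\<lambda>\<omega>. (snd \<omega>, fst \<omega>)) -` ?N' \<inter> space P"
      then show "\<omega> \<in> N" by simp
    next
      fix \<omega> assume w: "\<omega> \<in> N"
      then have "\<omega> \<in> space P" using sets.sets_into_space[OF N(3)] by blast
      then have "\<omega> \<in> space MX \<times> space MY" using spP by simp
      then show "\<omega> \<in> (\<lambda>\<omega>. (snd \<omega>, fst \<omega>)) -` ?N' \<inter> space P"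
        using w \<open>\<omega> \<in> space P\<close> by (cases \<omega>) (simp add: space_pair_measure)
    qed
    finally have "emeasure P' ?N' = 0" using N(2) by simp
    moreover have "{\<omega>\<in>space P'. \<not> Q (snd \<omega>, fst \<omega>)} \<subseteq> ?N'"
    proof
      fix \<omega> assume w: "\<omega> \<in> {\<omega>\<in>space P'. \<not> Q (snd \<omega>, fst \<omega>)}"
      then have "\<omega> \<in> space MY \<times> space MX" unfolding P'_def by (simp add: space_pair_measure)
      then have "(snd \<omega>, fst \<omega>) \<in> space P" using spP by (cases \<omega>) simp
      then have "(snd \<omega>, fst \<omega>) \<in> N" using N(1) w by blast
      then show "\<omega> \<in> ?N'" using \<open>\<omega> \<in> space MY \<times> space MX\<close> by (simp add: space_pair_measure)
    qed
    ultimately show ?thesis using N'S P'(2) by (intro AE_I[where N="?N'"]) simp_all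
  qed
  note D = disint_AE[where Q="\<lambda>\<omega>. Q (snd \<omega>, fst \<omega>)", OF P' KXYm rectY]
  have "AE y in distr P' MY fst. AE x in KXY y. Q (snd (y,x), fst (y,x))"
    apply (rule D) apply assumption apply assumption by (rule AEP')
  then show ?thesis by (simp only: P'fst prod.sel)
qed

end


lemma pos_int:
  fixes f :: "'a \<Rightarrow> real"
  assumes M: "prob_space M" and fm: "f \<in> borel_measurable M" and pos: "AE x in M. 0 < f x"
    and fin: "(\<integral>\<^sup>+x. ennreal (f x) \<partial>M) \<noteq> \<infinity>"
  shows "integrable M f \<and> (\<integral>\<^sup>+x. ennreal (f x) \<partial>M) = ennreal (integral\<^sup>L M f) \<and> 0 < integral\<^sup>L M f"
proof -
  have nn: "AE x in M. 0 \<le> f x" using pos by eventually_elim simp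
  have int: "integrable M f"
    by (rule integrableI_nonneg[OF fm nn]) (use fin in \<open>simp add: less_top\<close>)
  have eq: "(\<integral>\<^sup>+x. ennreal (f x) \<partial>M) = ennreal (integral\<^sup>L M f)"
    by (rule nn_integral_eq_integral[OF int nn])
  have ge: "0 \<le> integral\<^sup>L M f" by (rule integral_nonneg_AE[OF nn])
  have "integral\<^sup>L M f \<noteq> 0"
  proof
    assume z: "integral\<^sup>L M f = 0"
    then have "(\<integral>\<^sup>+x. ennreal (f x) \<partial>M) = 0" using eq by simp
    then have "AE x in M. ennreal (f x) = 0" using nn_integral_0_iff_AE[of "\<lambda>x. ennreal (f x)" M] fm by simp
    with pos have "AE x in M. False" by eventually_elim simp
    then show False using prob_space.AE_False[OF M] by simp
  qed
  with ge int eq show ?thesis by simp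
qed

lemma sfs_vimage:
  assumes M: "prob_space M" and f: "f \<in> M \<rightarrow>\<^sub>M N"
  shows "sigma_finite_subalgebra M (vimage_algebra (space M) f N)"
proof -
  interpret prob_space M by fact
  have sub: "subalgebra M (vimage_algebra (space M) f N)"
    unfolding subalgebra_def
  proof
    show "sets (vimage_algebra (space M) f N) \<subseteq> sets M"
      using f by (subst sets_vimage_algebra2) (auto simp: measurable_def)
  qed simp
  have "finite_measure_subalgebra M (vimage_algebra (space M) f N)"
    by unfold_locales (rule sub)
  then show ?thesis by (rule finite_measure_subalgebra_is_sigma_finite)
qed

context EMloc
begin

interpretation Pp: prob_space P by (rule P(1))

lemma hm[measurable]: "h \<in> borel_measurable MX"
  using h(1) unfolding prob_density_def by (simp add: measurable_cong_sets[OF sets_PX refl])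

lemma g_integrable: "integrable PY g"
  using g_int not_integrable_integral_eq by force

lemma gm[measurable]: "g \<in> borel_measurable MY"
  using borel_measurable_integrable[OF g_integrable] by (simp add: measurable_cong_sets[OF sets_PY refl])

lemma sfX: "sigma_finite_subalgebra P (sigX P MX)"
  unfolding sigX_def by (rule sfs_vimage[OF P(1) fstm])

lemma sfY: "sigma_finite_subalgebra P (sigY P MY)"
  unfolding sigY_def by (rule sfs_vimage[OF P(1) sndm])

lemma AE_PY_P: "AE y in PY. Q y \<Longrightarrow> {y \<in> space MY. Q y} \<in> sets MY \<Longrightarrow> AE \<omega> in P. Q (snd \<omega>)"
  unfolding PY_def by (subst (asm) AE_distr_iff) auto

lemma AE_PX_P: "AE x in PX. Q x \<Longrightarrow> {x \<in> space MX. Q x} \<in> sets MX \<Longrightarrow> AE \<omega> in P. Q (fst \<omega>)"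
  unfolding PX_def by (subst (asm) AE_distr_iff) auto

lemma AE_P_PX: "AE \<omega> in P. Q (fst \<omega>) \<Longrightarrow> {x \<in> space MX. Q x} \<in> sets MX \<Longrightarrow> AE x in PX. Q x"
  unfolding PX_def by (subst AE_distr_iff) auto

lemma AE_P_PY: "AE \<omega> in P. Q (snd \<omega>) \<Longrightarrow> {y \<in> space MY. Q y} \<in> sets MY \<Longrightarrow> AE y in PY. Q y"
  unfolding PY_def by (subst AE_distr_iff) auto

lemma kint_meas:
  fixes G :: "'b \<Rightarrow> real"
  assumes [measurable]: "G \<in> borel_measurable MY"
  shows "(\<lambda>x. \<integral>y. G y \<partial>KYX x) \<in> borel_measurable MX"
  using measurable_comp[OF KYXm integral_measurable_subprob_algebra[of G MY]] by (simp add: comp_def)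

lemma knn_meas:
  fixes G :: "'b \<Rightarrow> ennreal"
  assumes [measurable]: "G \<in> borel_measurable MY"
  shows "(\<lambda>x. \<integral>\<^sup>+y. G y \<partial>KYX x) \<in> borel_measurable MX"
  using measurable_comp[OF KYXm nn_integral_measurable_subprob_algebra[of G MY]] by (simp add: comp_def)

lemma kint_measY:
  fixes G :: "'a \<Rightarrow> real"
  assumes [measurable]: "G \<in> borel_measurable MX"
  shows "(\<lambda>y. \<integral>x. G x \<partial>KXY y) \<in> borel_measurable MY"
  using measurable_comp[OF KXYm integral_measurable_subprob_algebra[of G MX]] by (simp add: comp_def)

lemma knn_measY:
  fixes G :: "'a \<Rightarrow> ennreal"
  assumes [measurable]: "G \<in> borel_measurable MX"
  shows "(\<lambda>y. \<integral>\<^sup>+x. G x \<partial>KXY y) \<in> borel_measurable MY"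
  using measurable_comp[OF KXYm nn_integral_measurable_subprob_algebra[of G MX]] by (simp add: comp_def)

lemma measKYX: "x \<in> space MX \<Longrightarrow> G \<in> borel_measurable MY \<Longrightarrow> G \<in> borel_measurable (KYX x)"
  by (simp add: measurable_cong_sets[OF KYX1(2) refl])

lemma measKXY: "y \<in> space MY \<Longrightarrow> G \<in> borel_measurable MX \<Longrightarrow> G \<in> borel_measurable (KXY y)"
  by (simp add: measurable_cong_sets[OF KXY1(2) refl])

context
  fixes G :: "'b \<Rightarrow> real"
  assumes Gm[measurable]: "G \<in> borel_measurable MY" and Gnn: "AE y in PY. 0 \<le> G y"
    and Gi: "integrable PY G"
begin

lemma CE_a: "AE x in PX. integrable (KYX x) G \<and> (\<integral>\<^sup>+y. ennreal (G y) \<partial>KYX x) = ennreal (\<integral>y. G y \<partial>KYX x)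
   \<and> 0 \<le> (\<integral>y. G y \<partial>KYX x)"
proof -
  have mm: "(\<lambda>\<omega>. ennreal (G (snd \<omega>))) \<in> borel_measurable (MX \<Otimes>\<^sub>M MY)" by measurable
  have "(\<integral>\<^sup>+x. \<integral>\<^sup>+y. ennreal (G y) \<partial>KYX x \<partial>PX) = (\<integral>\<^sup>+\<omega>. ennreal (G (snd \<omega>)) \<partial>P)"
    using disX_nn[OF mm] by simp
  also have "\<dots> = (\<integral>\<^sup>+y. ennreal (G y) \<partial>PY)"
    unfolding PY_def by (subst nn_integral_distr) auto
  also have "\<dots> = ennreal (integral\<^sup>L PY G)"
    by (rule nn_integral_eq_integral[OF Gi Gnn])
  finally have fin: "(\<integral>\<^sup>+x. \<integral>\<^sup>+y. ennreal (G y) \<partial>KYX x \<partial>PX) \<noteq> \<infinity>" by simp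
  have m: "(\<lambda>x. \<integral>\<^sup>+y. ennreal (G y) \<partial>KYX x) \<in> borel_measurable PX"
    using knn_meas[of "\<lambda>y. ennreal (G y)"] by (simp add: measurable_cong_sets[OF sets_PX refl])
  have A1: "AE x in PX. (\<integral>\<^sup>+y. ennreal (G y) \<partial>KYX x) \<noteq> \<infinity>"
    by (rule nn_integral_PInf_AE[OF m fin])
  have "AE \<omega> in P. 0 \<le> G (snd \<omega>)" by (rule AE_PY_P[OF Gnn]) measurable
  then have A2: "AE x in PX. AE y in KYX x. 0 \<le> G y" using disX_AE[of "\<lambda>\<omega>. 0 \<le> G (snd \<omega>)"] by simp
  have A3: "AE x in PX. x \<in> space MX" by (rule AE_I2) simp
  from A1 A2 A3 show ?thesis
  proof eventually_elim
    case (elim x)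
    have Gmx: "G \<in> borel_measurable (KYX x)" using elim(3) by (intro measKYX) auto
    have i: "integrable (KYX x) G"
      by (rule integrableI_nonneg[OF Gmx elim(2)]) (use elim(1) in \<open>simp add: less_top\<close>)
    show ?case using i nn_integral_eq_integral[OF i elim(2)] integral_nonneg_AE[OF elim(2)] by simp
  qed
qed

lemma CE_m[measurable]: "(\<lambda>x. \<integral>y. G y \<partial>KYX x) \<in> borel_measurable MX"
  by (rule kint_meas) simp

lemma CE_c: "(\<integral>\<^sup>+x. ennreal (\<integral>y. G y \<partial>KYX x) \<partial>PX) = ennreal (integral\<^sup>L PY G)"
proof -
  have "(\<integral>\<^sup>+x. ennreal (\<integral>y. G y \<partial>KYX x) \<partial>PX) = (\<integral>\<^sup>+x. \<integral>\<^sup>+y. ennreal (G y) \<partial>KYX x \<partial>PX)"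
    using CE_a by (intro nn_integral_cong_AE) auto
  also have "\<dots> = (\<integral>\<^sup>+\<omega>. ennreal (G (snd \<omega>)) \<partial>P)"
  proof -
    have mm: "(\<lambda>\<omega>. ennreal (G (snd \<omega>))) \<in> borel_measurable (MX \<Otimes>\<^sub>M MY)" by measurable
    show ?thesis using disX_nn[OF mm] by simp
  qed
  also have "\<dots> = (\<integral>\<^sup>+y. ennreal (G y) \<partial>PY)"
    unfolding PY_def by (subst nn_integral_distr) auto
  also have "\<dots> = ennreal (integral\<^sup>L PY G)"
    by (rule nn_integral_eq_integral[OF Gi Gnn])
  finally show ?thesis .
qed

lemma CE_nn: "AE x in PX. 0 \<le> (\<integral>y. G y \<partial>KYX x)"
  using CE_a by eventually_elim auto

lemma CE_int: "integrable PX (\<lambda>x. \<integral>y. G y \<partial>KYX x)"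
  by (rule integrableI_nonneg[OF _ CE_nn]) (auto simp: CE_c measurable_cong_sets[OF sets_PX refl])

lemma CE_integral: "(\<integral>x. (\<integral>y. G y \<partial>KYX x) \<partial>PX) = integral\<^sup>L PY G"
proof -
  have "ennreal (\<integral>x. (\<integral>y. G y \<partial>KYX x) \<partial>PX) = ennreal (integral\<^sup>L PY G)"
    using nn_integral_eq_integral[OF CE_int CE_nn] CE_c by simp
  moreover have "0 \<le> integral\<^sup>L PY G" by (rule integral_nonneg_AE[OF Gnn])
  moreover have "0 \<le> (\<integral>x. (\<integral>y. G y \<partial>KYX x) \<partial>PX)" by (rule integral_nonneg_AE[OF CE_nn])
  ultimately show ?thesis by simp
qed

lemma CE_d: "AE \<omega> in P. real_cond_exp P (sigX P MX) (\<lambda>\<omega>. G (snd \<omega>)) \<omega> = (\<integral>y. G y \<partial>KYX (fst \<omega>))"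
proof -
  interpret sigma_finite_subalgebra P "sigX P MX" by (rule sfX)
  have GnnP: "AE \<omega> in P. 0 \<le> G (snd \<omega>)" by (rule AE_PY_P[OF Gnn]) measurable
  have cnnP: "AE \<omega> in P. 0 \<le> (\<integral>y. G y \<partial>KYX (fst \<omega>))" by (rule AE_PX_P[OF CE_nn]) measurable
  show ?thesis
  proof (rule real_cond_exp_charact)
    show "integrable P (\<lambda>\<omega>. G (snd \<omega>))"
      using Gi unfolding PY_def by (subst (asm) integrable_distr_eq) auto
    show "integrable P (\<lambda>\<omega>. \<integral>y. G y \<partial>KYX (fst \<omega>))"
      using CE_int unfolding PX_def by (subst (asm) integrable_distr_eq) auto
    show "(\<lambda>\<omega>. \<integral>y. G y \<partial>KYX (fst \<omega>)) \<in> borel_measurable (sigX P MX)"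
      unfolding sigX_def
      using measurable_comp[OF measurable_vimage_algebra1[of fst "space P" MX] CE_m]
      using measurable_space[OF fstm] by (auto simp: comp_def)
  next
    fix A assume A: "A \<in> sets (sigX P MX)"
    then obtain A' where A': "A' \<in> sets MX" "A = fst -` A' \<inter> space P"
      unfolding sigX_def using measurable_space[OF fstm] by (subst (asm) sets_vimage_algebra2) auto
    have e1: "(\<integral>\<omega>\<in>A. G (snd \<omega>) \<partial>P) = (\<integral>\<omega>. indicator A' (fst \<omega>) * G (snd \<omega>) \<partial>P)"
      unfolding set_lebesgue_integral_def A'(2) by (intro Bochner_Integration.integral_cong) (auto split: split_indicator)
    have e2: "(\<integral>\<omega>\<in>A. (\<integral>y. G y \<partial>KYX (fst \<omega>)) \<partial>P) = (\<integral>\<omega>. indicator A' (fst \<omega>) * (\<integral>y. G y \<partial>KYX (fst \<omega>)) \<partial>P)"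
      unfolding set_lebesgue_integral_def A'(2) by (intro Bochner_Integration.integral_cong) (auto split: split_indicator)
    have "(\<integral>\<^sup>+\<omega>. ennreal (indicator A' (fst \<omega>) * G (snd \<omega>)) \<partial>P)
        = (\<integral>\<^sup>+x. \<integral>\<^sup>+y. ennreal (indicator A' x * G y) \<partial>KYX x \<partial>PX)"
    proof -
      note [measurable] = A'(1)
      have mm: "(\<lambda>\<omega>. ennreal (indicator A' (fst \<omega>) * G (snd \<omega>))) \<in> borel_measurable (MX \<Otimes>\<^sub>M MY)" by measurable
      show ?thesis using disX_nn[OF mm] by simp
    qed
    also have "\<dots> = (\<integral>\<^sup>+x. ennreal (indicator A' x * (\<integral>y. G y \<partial>KYX x)) \<partial>PX)"
    proof (rule nn_integral_cong_AE)
      show "AE x in PX. (\<integral>\<^sup>+y. ennreal (indicator A' x * G y) \<partial>KYX x) = ennreal (indicator A' x * (\<integral>y. G y \<partial>KYX x))"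
        using CE_a
      proof eventually_elim
        case (elim x)
        have "(\<integral>\<^sup>+y. ennreal (indicator A' x * G y) \<partial>KYX x) = (\<integral>\<^sup>+y. ennreal (indicator A' x) * ennreal (G y) \<partial>KYX x)"
          by (simp add: ennreal_mult')
        also have "\<dots> = ennreal (indicator A' x) * (\<integral>\<^sup>+y. ennreal (G y) \<partial>KYX x)"
          by (rule nn_integral_cmult) (use elim in \<open>auto intro: measKYX\<close>)
        also have "\<dots> = ennreal (indicator A' x * (\<integral>y. G y \<partial>KYX x))"
          using elim by (simp add: ennreal_mult')
        finally show ?case .
      qed
    qed
    also have "\<dots> = (\<integral>\<^sup>+\<omega>. ennreal (indicator A' (fst \<omega>) * (\<integral>y. G y \<partial>KYX (fst \<omega>))) \<partial>P)"
      unfolding PX_def using A' by (subst nn_integral_distr) auto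
    finally have nneq: "(\<integral>\<^sup>+\<omega>. ennreal (indicator A' (fst \<omega>) * G (snd \<omega>)) \<partial>P) =
       (\<integral>\<^sup>+\<omega>. ennreal (indicator A' (fst \<omega>) * (\<integral>y. G y \<partial>KYX (fst \<omega>))) \<partial>P)" .
    have "(\<integral>\<omega>. indicator A' (fst \<omega>) * G (snd \<omega>) \<partial>P) = enn2real (\<integral>\<^sup>+\<omega>. ennreal (indicator A' (fst \<omega>) * G (snd \<omega>)) \<partial>P)"
      using A' GnnP by (intro integral_eq_nn_integral) (measurable, auto)
    also have "\<dots> = (\<integral>\<omega>. indicator A' (fst \<omega>) * (\<integral>y. G y \<partial>KYX (fst \<omega>)) \<partial>P)"
      unfolding nneq using A' cnnP by (intro integral_eq_nn_integral[symmetric]) (measurable, auto)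
    finally show "(\<integral>\<omega>\<in>A. G (snd \<omega>) \<partial>P) = (\<integral>\<omega>\<in>A. (\<integral>y. G y \<partial>KYX (fst \<omega>)) \<partial>P)"
      using e1 e2 by simp
  qed
qed

lemma CE_pos: "AE y in PY. 0 < G y \<Longrightarrow> AE x in PX. 0 < (\<integral>y. G y \<partial>KYX x)"
proof -
  assume pos: "AE y in PY. 0 < G y"
  have "AE \<omega> in P. 0 < G (snd \<omega>)" by (rule AE_PY_P[OF pos]) measurable
  then have A2: "AE x in PX. AE y in KYX x. 0 < G y" using disX_AE[of "\<lambda>\<omega>. 0 < G (snd \<omega>)"] by simp
  have A3: "AE x in PX. x \<in> space MX" by (rule AE_I2) simp
  from CE_a A2 A3 show ?thesis
  proof eventually_elim
    case (elim x)
    have "integrable (KYX x) G \<and> (\<integral>\<^sup>+y. ennreal (G y) \<partial>KYX x) = ennreal (integral\<^sup>L (KYX x) G) \<and> 0 < integral\<^sup>L (KYX x) G"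
      using elim by (intro pos_int KYX1 measKYX) auto
    then show ?case by simp
  qed
qed

end

context
  fixes G :: "'b \<Rightarrow> real" and cG :: "'a \<Rightarrow> real"
  assumes Gm[measurable]: "G \<in> borel_measurable MY" and cGm[measurable]: "cG \<in> borel_measurable MX"
    and cGa: "AE x in PX. (\<integral>\<^sup>+y. ennreal (G y) \<partial>KYX x) = ennreal (cG x) \<and> 0 < cG x"
begin

lemma W:
  assumes Fm[measurable]: "F \<in> borel_measurable MX" and Fnn: "\<forall>x\<in>space MX. 0 \<le> F x"
  shows "(\<integral>\<^sup>+\<omega>. ennreal (h (fst \<omega>) * G (snd \<omega>) / cG (fst \<omega>) * F (fst \<omega>)) \<partial>P) = (\<integral>\<^sup>+x. ennreal (h x * F x) \<partial>PX)"
proof -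
  have "(\<integral>\<^sup>+\<omega>. ennreal (h (fst \<omega>) * G (snd \<omega>) / cG (fst \<omega>) * F (fst \<omega>)) \<partial>P)
      = (\<integral>\<^sup>+x. \<integral>\<^sup>+y. ennreal (h x * G y / cG x * F x) \<partial>KYX x \<partial>PX)"
  proof -
    have mm: "(\<lambda>\<omega>. ennreal (h (fst \<omega>) * G (snd \<omega>) / cG (fst \<omega>) * F (fst \<omega>))) \<in> borel_measurable (MX \<Otimes>\<^sub>M MY)" by measurable
    show ?thesis using disX_nn[OF mm] by simp
  qed
  also have "\<dots> = (\<integral>\<^sup>+x. ennreal (h x * F x) \<partial>PX)"
  proof (rule nn_integral_cong_AE)
    have A3: "AE x in PX. x \<in> space MX" by (rule AE_I2) simp
    from cGa A3 show "AE x in PX. (\<integral>\<^sup>+y. ennreal (h x * G y / cG x * F x) \<partial>KYX x) = ennreal (h x * F x)"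
    proof eventually_elim
      case (elim x)
      have nn: "0 \<le> h x * F x / cG x" using elim h(2) Fnn by (auto intro!: divide_nonneg_pos)
      have "(\<integral>\<^sup>+y. ennreal (h x * G y / cG x * F x) \<partial>KYX x) = (\<integral>\<^sup>+y. ennreal (h x * F x / cG x) * ennreal (G y) \<partial>KYX x)"
      proof (intro nn_integral_cong)
        fix y
        have e: "h x * G y / cG x * F x = (h x * F x / cG x) * G y" by (simp add: field_simps)
        show "ennreal (h x * G y / cG x * F x) = ennreal (h x * F x / cG x) * ennreal (G y)"
          unfolding e by (rule ennreal_mult'[OF nn])
      qed
      also have "\<dots> = ennreal (h x * F x / cG x) * (\<integral>\<^sup>+y. ennreal (G y) \<partial>KYX x)"
        by (rule nn_integral_cmult) (use elim in \<open>auto intro: measKYX\<close>)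
      also have "\<dots> = ennreal (h x * F x / cG x) * ennreal (cG x)"
        using elim by simp
      also have "\<dots> = ennreal (h x * F x / cG x * cG x)"
        by (rule ennreal_mult'[OF nn, symmetric])
      also have "h x * F x / cG x * cG x = h x * F x" using elim by simp
      finally show ?case .
    qed
  qed
  finally show ?thesis .
qed

end

end


context EMloc
begin

interpretation Pp: prob_space P by (rule P(1))

definition cn where "cn n x = (\<integral>z. gs n z \<partial>KYX x)"
definition sn where "sn n y = (\<integral>x. h x / cn n x \<partial>KXY y)"
definition IND where "IND n \<longleftrightarrow> gs n \<in> borel_measurable MY \<and> (\<forall>y\<in>space MY. 0 \<le> gs n y) \<and>
   (\<integral>\<^sup>+y. ennreal (gs n y) \<partial>PY) = 1 \<and> (AE y in PY. 0 < gs n y)"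

lemma h_one: "(\<integral>\<^sup>+x. ennreal (h x) \<partial>PX) = 1"
proof -
  have "AE x in PX. 0 \<le> h x" using h(2) by (intro AE_I2) (auto intro: less_imp_le)
  then show ?thesis using h(1) unfolding prob_density_def
    by (subst nn_integral_eq_integral) auto
qed

lemma IND0: "IND 0"
proof -
  have m: "gs 0 \<in> borel_measurable MY"
    using g0(1) unfolding prob_density_def by (simp add: measurable_cong_sets[OF sets_PY refl])
  moreover have "AE y in PY. 0 \<le> gs 0 y" using g0(1) unfolding prob_density_def by simp
  ultimately have "(\<integral>\<^sup>+y. ennreal (gs 0 y) \<partial>PY) = 1"
    using g0(1) unfolding prob_density_def by (subst nn_integral_eq_integral) auto
  moreover have "AE y in PY. 0 < gs 0 y" using g0(2) by (intro AE_I2) auto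
  ultimately show ?thesis unfolding IND_def using m g0(2) by (auto intro: less_imp_le)
qed

context
  fixes n assumes I: "IND n"
begin

lemma gsm[measurable]: "gs n \<in> borel_measurable MY" using I unfolding IND_def by simp
lemma gs_nn: "y \<in> space MY \<Longrightarrow> 0 \<le> gs n y" using I unfolding IND_def by simp
lemma gs_one: "(\<integral>\<^sup>+y. ennreal (gs n y) \<partial>PY) = 1" using I unfolding IND_def by simp
lemma gs_pos: "AE y in PY. 0 < gs n y" using I unfolding IND_def by simp
lemma gs_nnAE: "AE y in PY. 0 \<le> gs n y" using gs_nn by (intro AE_I2) auto

lemma gs_int: "integrable PY (gs n)"
  by (rule integrableI_nonneg[OF _ gs_nnAE]) (auto simp: gs_one measurable_cong_sets[OF sets_PY refl])

lemma gs_integral: "integral\<^sup>L PY (gs n) = 1"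
  using nn_integral_eq_integral[OF gs_int gs_nnAE] gs_one by simp

lemma cnm[measurable]: "cn n \<in> borel_measurable MX"
  unfolding cn_def by (rule kint_meas) simp

lemma cn_nn: "x \<in> space MX \<Longrightarrow> 0 \<le> cn n x"
  unfolding cn_def by (rule integral_nonneg_AE, rule AE_I2) (auto simp: KYX_space gs_nn)

lemma cn_a: "AE x in PX. (\<integral>\<^sup>+y. ennreal (gs n y) \<partial>KYX x) = ennreal (cn n x) \<and> 0 < cn n x"
  using CE_a[OF gsm gs_nnAE gs_int] CE_pos[OF gsm gs_nnAE gs_int gs_pos]
  unfolding cn_def by eventually_elim auto

lemma cn_posP: "AE \<omega> in P. 0 < cn n (fst \<omega>)"
  using cn_a by (intro AE_PX_P) (auto elim: eventually_mono)

lemma Wn: "F \<in> borel_measurable MX \<Longrightarrow> \<forall>x\<in>space MX. 0 \<le> F x \<Longrightarrow>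
  (\<integral>\<^sup>+\<omega>. ennreal (h (fst \<omega>) * gs n (snd \<omega>) / cn n (fst \<omega>) * F (fst \<omega>)) \<partial>P) = (\<integral>\<^sup>+x. ennreal (h x * F x) \<partial>PX)"
  by (rule W[OF gsm cnm cn_a])

lemma Wn1: "(\<integral>\<^sup>+\<omega>. ennreal (h (fst \<omega>) * gs n (snd \<omega>) / cn n (fst \<omega>)) \<partial>P) = 1"
  using Wn[of "\<lambda>_. 1"] h_one by simp

lemma hcm[measurable]: "(\<lambda>x. h x / cn n x) \<in> borel_measurable MX" by measurable

lemma Sm[measurable]: "(\<lambda>y. \<integral>\<^sup>+x. ennreal (h x / cn n x) \<partial>KXY y) \<in> borel_measurable MY"
  by (rule knn_measY) measurable

lemma S_one: "(\<integral>\<^sup>+y. ennreal (gs n y) * (\<integral>\<^sup>+x. ennreal (h x / cn n x) \<partial>KXY y) \<partial>PY) = 1"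
proof -
  have mm: "(\<lambda>\<omega>. ennreal (h (fst \<omega>) * gs n (snd \<omega>) / cn n (fst \<omega>))) \<in> borel_measurable (MX \<Otimes>\<^sub>M MY)"
    by measurable
  have "1 = (\<integral>\<^sup>+\<omega>. ennreal (h (fst \<omega>) * gs n (snd \<omega>) / cn n (fst \<omega>)) \<partial>P)" using Wn1 by simp
  also have "\<dots> = (\<integral>\<^sup>+y. \<integral>\<^sup>+x. ennreal (h x * gs n y / cn n x) \<partial>KXY y \<partial>PY)"
    using disY_nn[OF mm] by simp
  also have "\<dots> = (\<integral>\<^sup>+y. ennreal (gs n y) * (\<integral>\<^sup>+x. ennreal (h x / cn n x) \<partial>KXY y) \<partial>PY)"
  proof (rule nn_integral_cong)
    fix y assume y: "y \<in> space PY"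
    have "(\<integral>\<^sup>+x. ennreal (h x * gs n y / cn n x) \<partial>KXY y) = (\<integral>\<^sup>+x. ennreal (gs n y) * ennreal (h x / cn n x) \<partial>KXY y)"
    proof (rule nn_integral_cong)
      fix x
      have e: "h x * gs n y / cn n x = gs n y * (h x / cn n x)" by simp
      show "ennreal (h x * gs n y / cn n x) = ennreal (gs n y) * ennreal (h x / cn n x)"
        unfolding e using gs_nn y by (intro ennreal_mult') simp
    qed
    also have "\<dots> = ennreal (gs n y) * (\<integral>\<^sup>+x. ennreal (h x / cn n x) \<partial>KXY y)"
      using y by (intro nn_integral_cmult measKXY) auto
    finally show "(\<integral>\<^sup>+x. ennreal (h x * gs n y / cn n x) \<partial>KXY y) = ennreal (gs n y) * (\<integral>\<^sup>+x. ennreal (h x / cn n x) \<partial>KXY y)" .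
  qed
  finally show ?thesis by simp
qed

lemma S_fin: "AE y in PY. (\<integral>\<^sup>+x. ennreal (h x / cn n x) \<partial>KXY y) \<noteq> \<infinity>"
proof -
  have m: "(\<lambda>y. ennreal (gs n y) * (\<integral>\<^sup>+x. ennreal (h x / cn n x) \<partial>KXY y)) \<in> borel_measurable PY"
    by (simp add: measurable_cong_sets[OF sets_PY refl])
  have "AE y in PY. ennreal (gs n y) * (\<integral>\<^sup>+x. ennreal (h x / cn n x) \<partial>KXY y) \<noteq> \<infinity>"
    by (rule nn_integral_PInf_AE[OF m]) (simp add: S_one)
  with gs_pos show ?thesis
    by eventually_elim (auto simp: ennreal_mult_eq_top_iff)
qed

lemma hc_pos: "AE y in PY. AE x in KXY y. 0 < h x / cn n x"
proof -
  have sp: "AE \<omega> in P. \<omega> \<in> space P" by (rule AE_I2) simp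
  have "AE \<omega> in P. 0 < h (fst \<omega>) / cn n (fst \<omega>)"
    using cn_posP sp
  proof eventually_elim
    case (elim \<omega>)
    then show ?case using h(2) spP by auto
  qed
  then show ?thesis using disY_AE[of "\<lambda>\<omega>. 0 < h (fst \<omega>) / cn n (fst \<omega>)"] by simp
qed

lemma sn_a: "AE y in PY. integrable (KXY y) (\<lambda>x. h x / cn n x) \<and>
   (\<integral>\<^sup>+x. ennreal (h x / cn n x) \<partial>KXY y) = ennreal (sn n y) \<and> 0 < sn n y"
proof -
  have A3: "AE y in PY. y \<in> space MY" by (rule AE_I2) simp
  from S_fin hc_pos A3 show ?thesis
  proof eventually_elim
    case (elim y)
    show ?case unfolding sn_def using elim by (intro pos_int KXY1 measKXY) auto
  qed
qed

lemma snm[measurable]: "sn n \<in> borel_measurable MY"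
  unfolding sn_def by (rule kint_measY) measurable

lemma hc_nn: "x \<in> space MX \<Longrightarrow> 0 \<le> h x / cn n x"
proof -
  assume x: "x \<in> space MX"
  then have "0 \<le> h x" using h(2) less_imp_le by blast
  then show ?thesis using cn_nn[OF x] by (rule divide_nonneg_nonneg)
qed

lemma sn_nn: "y \<in> space MY \<Longrightarrow> 0 \<le> sn n y"
  unfolding sn_def by (intro integral_nonneg_AE AE_I2) (auto simp: KXY_space hc_nn)

lemma rec': "y \<in> space MY \<Longrightarrow> gs (Suc n) y = gs n y * sn n y"
proof -
  assume y: "y \<in> space MY"
  have "gs (Suc n) y = (\<integral>x. EM_q KYX gs n x y * h x \<partial>KXY y)" using rec y by simp
  also have "\<dots> = (\<integral>x. gs n y * (h x / cn n x) \<partial>KXY y)"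
    unfolding EM_q_def cn_def by simp
  also have "\<dots> = gs n y * sn n y" unfolding sn_def by (rule integral_mult_right_zero)
  finally show ?thesis .
qed

lemma IND_Suc: "IND (Suc n)"
proof -
  have m: "gs (Suc n) \<in> borel_measurable MY"
    by (rule measurable_cong[THEN iffD2, of _ _ "\<lambda>y. gs n y * sn n y"]) (auto simp: rec')
  have nn: "\<forall>y\<in>space MY. 0 \<le> gs (Suc n) y" using rec' gs_nn sn_nn by simp
  have "(\<integral>\<^sup>+y. ennreal (gs (Suc n) y) \<partial>PY) = (\<integral>\<^sup>+y. ennreal (gs n y) * (\<integral>\<^sup>+x. ennreal (h x / cn n x) \<partial>KXY y) \<partial>PY)"
  proof (rule nn_integral_cong_AE)
    have A3: "AE y in PY. y \<in> space MY" by (rule AE_I2) simp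
    from sn_a A3 show "AE y in PY. ennreal (gs (Suc n) y) = ennreal (gs n y) * (\<integral>\<^sup>+x. ennreal (h x / cn n x) \<partial>KXY y)"
      by eventually_elim (simp add: rec' ennreal_mult' gs_nn)
  qed
  then have one: "(\<integral>\<^sup>+y. ennreal (gs (Suc n) y) \<partial>PY) = 1" using S_one by simp
  have "AE y in PY. 0 < gs (Suc n) y"
  proof -
    have A3: "AE y in PY. y \<in> space MY" by (rule AE_I2) simp
    from sn_a gs_pos A3 show ?thesis by eventually_elim (simp add: rec')
  qed
  then show ?thesis unfolding IND_def using m nn one by simp
qed

end

lemma IND_all: "IND n"
  by (induction n) (auto intro: IND0 IND_Suc)

end


lemma ln_ge: "0 < (a::real) \<Longrightarrow> 1 - 1/a \<le> ln a"
proof -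
  assume a: "0 < a"
  have "ln (1/a) \<le> 1/a - 1" by (rule ln_le_minus_one) (simp add: a)
  moreover have "ln (1/a) = - ln a" using a by (simp add: ln_div)
  ultimately show ?thesis by simp
qed

lemma key_real:
  fixes hx G G' c c' :: real
  assumes "0 < hx" "0 < G" "0 < G'" "0 < c" "0 < c'"
  shows "2*(hx*G/c) + (hx*G/c) * max (- ln (c'/c)) 0 \<le>
     (hx*G/c) * max (ln (c'/c)) 0 + (hx*G/c) * (G/G') + (hx*G/c) * (G'*c/(c'*G))"
proof -
  define w where "w = hx*G/c"
  have w: "0 < w" unfolding w_def using assms by simp
  define L where "L = ln (c'/c)"
  have e: "c'/c = (G'/G) * (c'*G/(c*G'))" using assms by (simp add: field_simps)
  have pa: "0 < G'/G" "0 < c'*G/(c*G')" using assms by simp_all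
  have "L = ln (G'/G) + ln (c'*G/(c*G'))" unfolding L_def e by (rule ln_mult_pos[OF pa])
  moreover have "1 - 1/(G'/G) \<le> ln (G'/G)" by (rule ln_ge[OF pa(1)])
  moreover have "1 - 1/(c'*G/(c*G')) \<le> ln (c'*G/(c*G'))" by (rule ln_ge[OF pa(2)])
  moreover have "1/(G'/G) = G/G'" by simp
  moreover have "1/(c'*G/(c*G')) = G'*c/(c'*G)" by (simp add: mult.commute)
  ultimately have Lge: "2 - G/G' - G'*c/(c'*G) \<le> L" by linarith
  have "w * (2 - G/G' - G'*c/(c'*G)) \<le> w * L" by (rule mult_left_mono[OF Lge]) (use w in simp)
  moreover have "w * max L 0 - w * max (-L) 0 = w * L" by (simp add: max_def algebra_simps)
  ultimately show ?thesis unfolding w_def[symmetric] L_def[symmetric] by (simp add: algebra_simps)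
qed

lemma rho_nn: "0 < (t::real) \<Longrightarrow> 0 < s \<Longrightarrow> 0 \<le> t * ln (t/s) - t + s"
proof -
  assume t: "0 < t" and s: "0 < s"
  have "1 - 1/(t/s) \<le> ln (t/s)" by (rule ln_ge) (use t s in simp)
  then have "t * (1 - s/t) \<le> t * ln (t/s)" using t by (intro mult_left_mono) auto
  moreover have "t * (1 - s/t) = t - s" using t by (simp add: field_simps)
  ultimately show ?thesis by simp
qed

lemma enn_ineq:
  fixes a b c d e :: real
  assumes "0 \<le> a" "0 \<le> b" "0 \<le> c" "0 \<le> d" "0 \<le> e" "d + e \<le> a + b + c"
  shows "ennreal d + ennreal e \<le> ennreal a + ennreal b + ennreal c"
proof -
  have "ennreal (d + e) \<le> ennreal (a + b + c)" by (rule ennreal_leI) fact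
  then show ?thesis using assms by simp
qed

context EMloc
begin

interpretation Pp: prob_space P by (rule P(1))

lemmas gsmA[measurable] = gsm[OF IND_all]
lemmas cnmA[measurable] = cnm[OF IND_all]

lemma hnm[measurable]: "hn n \<in> borel_measurable MX" using hn by simp

lemma HN: "AE x in PX. hn n x = cn n x"
proof -
  have a: "AE \<omega> in P. real_cond_exp P (sigX P MX) (\<lambda>\<omega>. gs n (snd \<omega>)) \<omega> = hn n (fst \<omega>)"
    using hn by simp
  note b = CE_d[OF gsm[OF IND_all[of n]] gs_nnAE[OF IND_all[of n]] gs_int[OF IND_all[of n]]]
  from a b have "AE \<omega> in P. hn n (fst \<omega>) = cn n (fst \<omega>)"
    unfolding cn_def by eventually_elim simp
  then show ?thesis
    by (rule AE_P_PX) measurable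
qed


lemma hlog_int: "integrable PX (\<lambda>x. h x * ln (h x / cn n x))"
proof -
  have i1: "integrable PX (\<lambda>x. h x * ln (h x / hn n x))"
  proof (rule Bochner_Integration.integrable_bound[OF KL_fin[rule_format, of n]])
    show "(\<lambda>x. h x * ln (h x / hn n x)) \<in> borel_measurable PX"
      by (simp add: measurable_cong_sets[OF sets_PX refl])
    show "AE x in PX. norm (h x * ln (h x / hn n x)) \<le> norm (h x * \<bar>ln (h x / hn n x)\<bar>)"
      by (rule AE_I2) (auto simp: abs_mult)
  qed
  show ?thesis
  proof (rule integrable_cong_AE[THEN iffD1, OF _ _ _ i1])
    show "AE x in PX. h x * ln (h x / hn n x) = h x * ln (h x / cn n x)"
      using HN[of n] by eventually_elim simp
  qed (auto simp: measurable_cong_sets[OF sets_PX refl])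
qed

lemma KL_eq: "KL PX h (hn n) = (\<integral>x. h x * ln (h x / cn n x) \<partial>PX)"
  unfolding KL_def
  by (rule integral_cong_AE) (use HN[of n] in \<open>auto simp: measurable_cong_sets[OF sets_PX refl] elim: eventually_mono\<close>)

lemma cn_aA: "AE x in PX. 0 < cn n x"
  using cn_a[OF IND_all[of n]] by eventually_elim simp

definition wn where "wn n \<omega> = h (fst \<omega>) * gs n (snd \<omega>) / cn n (fst \<omega>)"

lemma MON: "(\<integral>x. h x * ln (h x / cn (Suc n) x) \<partial>PX) \<le> (\<integral>x. h x * ln (h x / cn n x) \<partial>PX)"
proof -
  define L where "L x = ln (cn (Suc n) x / cn n x)" for x
  define Lp where "Lp x = max (L x) 0" for x
  define Lm where "Lm x = max (- L x) 0" for x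
  have Lm_m[measurable]: "L \<in> borel_measurable MX" "Lp \<in> borel_measurable MX" "Lm \<in> borel_measurable MX"
    unfolding L_def Lp_def Lm_def by measurable
  have spX: "AE x in PX. x \<in> space MX" by (rule AE_I2) simp
  have hL_eq: "AE x in PX. h x * L x = h x * ln (h x / cn n x) - h x * ln (h x / cn (Suc n) x)"
    using cn_aA[of n] cn_aA[of "Suc n"] spX
  proof eventually_elim
    case (elim x)
    then have "0 < h x" using h(2) by auto
    then show ?case using elim unfolding L_def by (simp add: ln_div algebra_simps)
  qed
  have hL_int: "integrable PX (\<lambda>x. h x * L x)"
  proof (rule integrable_cong_AE[THEN iffD2, OF _ _ hL_eq])
    show "integrable PX (\<lambda>x. h x * ln (h x / cn n x) - h x * ln (h x / cn (Suc n) x))"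
      by (intro Bochner_Integration.integrable_diff hlog_int)
  qed (auto simp: measurable_cong_sets[OF sets_PX refl])
  have hL_int_eq: "(\<integral>x. h x * L x \<partial>PX) = (\<integral>x. h x * ln (h x / cn n x) \<partial>PX) - (\<integral>x. h x * ln (h x / cn (Suc n) x) \<partial>PX)"
  proof -
    have "(\<integral>x. h x * L x \<partial>PX) = (\<integral>x. h x * ln (h x / cn n x) - h x * ln (h x / cn (Suc n) x) \<partial>PX)"
      by (rule integral_cong_AE[OF _ _ hL_eq]) (auto simp: measurable_cong_sets[OF sets_PX refl])
    also have "\<dots> = (\<integral>x. h x * ln (h x / cn n x) \<partial>PX) - (\<integral>x. h x * ln (h x / cn (Suc n) x) \<partial>PX)"
      by (intro Bochner_Integration.integral_diff hlog_int)
    finally show ?thesis .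
  qed
  have hnn: "x \<in> space MX \<Longrightarrow> 0 \<le> h x" for x using h(2) less_imp_le by blast
  have Lpnn: "\<forall>x\<in>space MX. 0 \<le> Lp x" and Lmnn: "\<forall>x\<in>space MX. 0 \<le> Lm x" unfolding Lp_def Lm_def by auto
  have hLp_int: "integrable PX (\<lambda>x. h x * Lp x)"
    by (rule Bochner_Integration.integrable_bound[OF hL_int])
       (auto simp: measurable_cong_sets[OF sets_PX refl] Lp_def abs_mult hnn intro!: AE_I2 mult_left_mono)
  have hLm_int: "integrable PX (\<lambda>x. h x * Lm x)"
    by (rule Bochner_Integration.integrable_bound[OF hL_int])
       (auto simp: measurable_cong_sets[OF sets_PX refl] Lm_def abs_mult hnn intro!: AE_I2 mult_left_mono)
  have hL_split: "(\<integral>x. h x * L x \<partial>PX) = (\<integral>x. h x * Lp x \<partial>PX) - (\<integral>x. h x * Lm x \<partial>PX)"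
  proof -
    have "(\<integral>x. h x * L x \<partial>PX) = (\<integral>x. h x * Lp x - h x * Lm x \<partial>PX)"
      unfolding Lp_def Lm_def by (intro Bochner_Integration.integral_cong) (auto simp: max_def algebra_simps)
    also have "\<dots> = (\<integral>x. h x * Lp x \<partial>PX) - (\<integral>x. h x * Lm x \<partial>PX)"
      by (intro Bochner_Integration.integral_diff hLp_int hLm_int)
    finally show ?thesis .
  qed
  have Ip: "(\<integral>\<^sup>+x. ennreal (h x * Lp x) \<partial>PX) = ennreal (\<integral>x. h x * Lp x \<partial>PX)"
    by (rule nn_integral_eq_integral[OF hLp_int]) (auto intro!: AE_I2 simp: hnn Lpnn)
  have Im: "(\<integral>\<^sup>+x. ennreal (h x * Lm x) \<partial>PX) = ennreal (\<integral>x. h x * Lm x \<partial>PX)"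
    by (rule nn_integral_eq_integral[OF hLm_int]) (auto intro!: AE_I2 simp: hnn Lmnn)
  define u where "u \<omega> = gs n (snd \<omega>) / gs (Suc n) (snd \<omega>)" for \<omega> :: "'a \<times> 'b"
  define v where "v \<omega> = gs (Suc n) (snd \<omega>) * cn n (fst \<omega>) / (cn (Suc n) (fst \<omega>) * gs n (snd \<omega>))" for \<omega>
  have T1: "(\<integral>\<^sup>+\<omega>. ennreal (wn n \<omega> * Lp (fst \<omega>)) \<partial>P) = ennreal (\<integral>x. h x * Lp x \<partial>PX)"
    unfolding wn_def Ip[symmetric] by (rule Wn[OF IND_all[of n] Lm_m(2) Lpnn])
  have T2: "(\<integral>\<^sup>+\<omega>. ennreal (wn n \<omega> * Lm (fst \<omega>)) \<partial>P) = ennreal (\<integral>x. h x * Lm x \<partial>PX)"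
    unfolding wn_def Im[symmetric] by (rule Wn[OF IND_all[of n] Lm_m(3) Lmnn])
  have T5: "(\<integral>\<^sup>+\<omega>. ennreal (2 * wn n \<omega>) \<partial>P) = 2"
  proof -
    have "(\<integral>\<^sup>+\<omega>. ennreal (2 * wn n \<omega>) \<partial>P) = (\<integral>\<^sup>+\<omega>. 2 * ennreal (wn n \<omega>) \<partial>P)"
      by (intro nn_integral_cong) (simp add: ennreal_mult')
    also have "\<dots> = 2 * (\<integral>\<^sup>+\<omega>. ennreal (wn n \<omega>) \<partial>P)"
      unfolding wn_def by (rule nn_integral_cmult) measurable
    also have "\<dots> = 2" unfolding wn_def using Wn1[OF IND_all[of n]] by simp
    finally show ?thesis .
  qed
  have T3: "(\<integral>\<^sup>+\<omega>. ennreal (wn n \<omega> * u \<omega>) \<partial>P) = 1"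
  proof -
    have mm: "(\<lambda>\<omega>. ennreal (wn n \<omega> * u \<omega>)) \<in> borel_measurable (MX \<Otimes>\<^sub>M MY)"
      unfolding wn_def u_def by measurable
    have "(\<integral>\<^sup>+\<omega>. ennreal (wn n \<omega> * u \<omega>) \<partial>P) =
       (\<integral>\<^sup>+y. \<integral>\<^sup>+x. ennreal (h x * gs n y / cn n x * (gs n y / gs (Suc n) y)) \<partial>KXY y \<partial>PY)"
      using disY_nn[OF mm] unfolding wn_def u_def by simp
    also have "\<dots> = (\<integral>\<^sup>+y. ennreal (gs n y) \<partial>PY)"
    proof (rule nn_integral_cong_AE)
      have spY: "AE y in PY. y \<in> space MY" by (rule AE_I2) simp
      from sn_a[OF IND_all, of n] gs_pos[OF IND_all, of n] spY
      show "AE y in PY. (\<integral>\<^sup>+x. ennreal (h x * gs n y / cn n x * (gs n y / gs (Suc n) y)) \<partial>KXY y) = ennreal (gs n y)"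
      proof eventually_elim
        case (elim y)
        have G': "gs (Suc n) y = gs n y * sn n y" using rec'[OF IND_all[of n] elim(3)] .
        have nn: "0 \<le> gs n y * gs n y / gs (Suc n) y" using elim G' by simp
        have "(\<integral>\<^sup>+x. ennreal (h x * gs n y / cn n x * (gs n y / gs (Suc n) y)) \<partial>KXY y)
            = (\<integral>\<^sup>+x. ennreal (gs n y * gs n y / gs (Suc n) y) * ennreal (h x / cn n x) \<partial>KXY y)"
        proof (rule nn_integral_cong)
          fix x
          have e: "h x * gs n y / cn n x * (gs n y / gs (Suc n) y) = (gs n y * gs n y / gs (Suc n) y) * (h x / cn n x)"
            by (simp add: divide_inverse ac_simps)
          show "ennreal (h x * gs n y / cn n x * (gs n y / gs (Suc n) y)) = ennreal (gs n y * gs n y / gs (Suc n) y) * ennreal (h x / cn n x)"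
            unfolding e by (rule ennreal_mult'[OF nn])
        qed
        also have "\<dots> = ennreal (gs n y * gs n y / gs (Suc n) y) * (\<integral>\<^sup>+x. ennreal (h x / cn n x) \<partial>KXY y)"
          using elim by (intro nn_integral_cmult measKXY) auto
        also have "\<dots> = ennreal (gs n y * gs n y / gs (Suc n) y) * ennreal (sn n y)"
          using elim by simp
        also have "\<dots> = ennreal (gs n y * gs n y / gs (Suc n) y * sn n y)"
          by (rule ennreal_mult'[OF nn, symmetric])
        also have "gs n y * gs n y / gs (Suc n) y * sn n y = gs n y"
          using elim G' by (simp add: field_simps)
        finally show ?case .
      qed
    qed
    also have "\<dots> = 1" by (rule gs_one[OF IND_all[of n]])
    finally show ?thesis .
  qed
  have T4: "(\<integral>\<^sup>+\<omega>. ennreal (wn n \<omega> * v \<omega>) \<partial>P) = 1"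
  proof -
    have "(\<integral>\<^sup>+\<omega>. ennreal (wn n \<omega> * v \<omega>) \<partial>P) = (\<integral>\<^sup>+\<omega>. ennreal (wn (Suc n) \<omega>) \<partial>P)"
    proof (rule nn_integral_cong_AE)
      have "AE \<omega> in P. 0 < gs n (snd \<omega>)" by (rule AE_PY_P[OF gs_pos[OF IND_all[of n]]]) measurable
      with cn_posP[OF IND_all, of n]
      show "AE \<omega> in P. ennreal (wn n \<omega> * v \<omega>) = ennreal (wn (Suc n) \<omega>)"
        by eventually_elim (simp add: wn_def v_def field_simps)
    qed
    also have "\<dots> = 1" unfolding wn_def by (rule Wn1[OF IND_all[of "Suc n"]])
    finally show ?thesis .
  qed
  have PW: "AE \<omega> in P. ennreal (2 * wn n \<omega>) + ennreal (wn n \<omega> * Lm (fst \<omega>)) \<le>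
      ennreal (wn n \<omega> * Lp (fst \<omega>)) + ennreal (wn n \<omega> * u \<omega>) + ennreal (wn n \<omega> * v \<omega>)"
  proof -
    have a1: "AE \<omega> in P. 0 < gs n (snd \<omega>)" by (rule AE_PY_P[OF gs_pos[OF IND_all[of n]]]) measurable
    have a2: "AE \<omega> in P. 0 < gs (Suc n) (snd \<omega>)" by (rule AE_PY_P[OF gs_pos[OF IND_all[of "Suc n"]]]) measurable
    have a3: "AE \<omega> in P. \<omega> \<in> space P" by (rule AE_I2) simp
    from a1 a2 a3 cn_posP[OF IND_all, of n] cn_posP[OF IND_all, of "Suc n"] show ?thesis
    proof eventually_elim
      case (elim \<omega>)
      have hp: "0 < h (fst \<omega>)" using elim(3) spP h(2) by auto
      have wp: "0 < wn n \<omega>" unfolding wn_def using hp elim by simp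
      note K = key_real[OF hp elim(1) elim(2) elim(4) elim(5)]
      have K': "2 * wn n \<omega> + wn n \<omega> * Lm (fst \<omega>) \<le> wn n \<omega> * Lp (fst \<omega>) + wn n \<omega> * u \<omega> + wn n \<omega> * v \<omega>"
        using K unfolding wn_def Lp_def Lm_def L_def u_def v_def .
      have w0: "0 \<le> wn n \<omega>" using wp by simp
      have u0: "0 \<le> u \<omega>" unfolding u_def using elim by (intro divide_nonneg_nonneg less_imp_le)
      have v0: "0 \<le> v \<omega>" unfolding v_def using elim by (intro divide_nonneg_nonneg mult_nonneg_nonneg less_imp_le)
      have p0: "0 \<le> Lp (fst \<omega>)" "0 \<le> Lm (fst \<omega>)" unfolding Lp_def Lm_def by simp_all
      show ?case
        by (rule enn_ineq[OF _ _ _ _ _ K']) (use w0 u0 v0 p0 in \<open>simp_all\<close>)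
    qed
  qed
  have "(\<integral>\<^sup>+\<omega>. ennreal (2 * wn n \<omega>) + ennreal (wn n \<omega> * Lm (fst \<omega>)) \<partial>P) \<le>
      (\<integral>\<^sup>+\<omega>. ennreal (wn n \<omega> * Lp (fst \<omega>)) + ennreal (wn n \<omega> * u \<omega>) + ennreal (wn n \<omega> * v \<omega>) \<partial>P)"
    by (rule nn_integral_mono_AE[OF PW])
  also have "\<dots> = (\<integral>\<^sup>+\<omega>. ennreal (wn n \<omega> * Lp (fst \<omega>)) \<partial>P) + (\<integral>\<^sup>+\<omega>. ennreal (wn n \<omega> * u \<omega>) \<partial>P)
      + (\<integral>\<^sup>+\<omega>. ennreal (wn n \<omega> * v \<omega>) \<partial>P)"
  proof -
    have m1: "(\<lambda>\<omega>. ennreal (wn n \<omega> * Lp (fst \<omega>))) \<in> borel_measurable P" unfolding wn_def by measurable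
    have m2: "(\<lambda>\<omega>. ennreal (wn n \<omega> * u \<omega>)) \<in> borel_measurable P" unfolding wn_def u_def by measurable
    have m3: "(\<lambda>\<omega>. ennreal (wn n \<omega> * v \<omega>)) \<in> borel_measurable P" unfolding wn_def v_def by measurable
    have "(\<integral>\<^sup>+\<omega>. ennreal (wn n \<omega> * Lp (fst \<omega>)) + ennreal (wn n \<omega> * u \<omega>) + ennreal (wn n \<omega> * v \<omega>) \<partial>P)
      = (\<integral>\<^sup>+\<omega>. ennreal (wn n \<omega> * Lp (fst \<omega>)) + ennreal (wn n \<omega> * u \<omega>) \<partial>P) + (\<integral>\<^sup>+\<omega>. ennreal (wn n \<omega> * v \<omega>) \<partial>P)"
      by (rule nn_integral_add[OF borel_measurable_add[OF m1 m2] m3])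
    also have "(\<integral>\<^sup>+\<omega>. ennreal (wn n \<omega> * Lp (fst \<omega>)) + ennreal (wn n \<omega> * u \<omega>) \<partial>P)
      = (\<integral>\<^sup>+\<omega>. ennreal (wn n \<omega> * Lp (fst \<omega>)) \<partial>P) + (\<integral>\<^sup>+\<omega>. ennreal (wn n \<omega> * u \<omega>) \<partial>P)"
      by (rule nn_integral_add[OF m1 m2])
    finally show ?thesis .
  qed
  also have "(\<integral>\<^sup>+\<omega>. ennreal (2 * wn n \<omega>) + ennreal (wn n \<omega> * Lm (fst \<omega>)) \<partial>P) =
     (\<integral>\<^sup>+\<omega>. ennreal (2 * wn n \<omega>) \<partial>P) + (\<integral>\<^sup>+\<omega>. ennreal (wn n \<omega> * Lm (fst \<omega>)) \<partial>P)"
    unfolding wn_def by (rule nn_integral_add) measurable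
  finally have "2 + ennreal (\<integral>x. h x * Lm x \<partial>PX) \<le> ennreal (\<integral>x. h x * Lp x \<partial>PX) + 1 + 1"
    unfolding T1 T2 T3 T4 T5 .
  then have "2 + ennreal (\<integral>x. h x * Lm x \<partial>PX) \<le> 2 + ennreal (\<integral>x. h x * Lp x \<partial>PX)"
    by (simp add: add.commute add.left_commute one_add_one[symmetric] add.assoc del: one_add_one)
  then have "ennreal (\<integral>x. h x * Lm x \<partial>PX) \<le> ennreal (\<integral>x. h x * Lp x \<partial>PX)"
    by (simp add: ennreal_add_left_cancel_le)
  moreover have "0 \<le> (\<integral>x. h x * Lp x \<partial>PX)"
    by (rule integral_nonneg_AE) (auto intro!: AE_I2 simp: hnn Lpnn)
  ultimately have "(\<integral>x. h x * Lm x \<partial>PX) \<le> (\<integral>x. h x * Lp x \<partial>PX)" by simp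
  then have "0 \<le> (\<integral>x. h x * L x \<partial>PX)" using hL_split by simp
  then show ?thesis using hL_int_eq by simp
qed

lemma KL_mono: "n \<le> m \<Longrightarrow> (\<integral>x. h x * ln (h x / cn m x) \<partial>PX) \<le> (\<integral>x. h x * ln (h x / cn n x) \<partial>PX)"
proof (induction m rule: dec_induct)
  case (step m)
  then show ?case using MON[of m] by linarith
qed simp

end


context EMloc
begin

interpretation Pp: prob_space P by (rule P(1))

definition cg where "cg x = (\<integral>z. g z \<partial>KYX x)"

lemma gpos: "AE y in PY. 0 < g y" using g_lim by eventually_elim simp
lemma gnn: "AE y in PY. 0 \<le> g y" using g_lim by eventually_elim simp

lemma cgm[measurable]: "cg \<in> borel_measurable MX"
  unfolding cg_def by (rule CE_m[OF gm gnn g_integrable])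

lemma cg_a: "AE x in PX. (\<integral>\<^sup>+y. ennreal (g y) \<partial>KYX x) = ennreal (cg x) \<and> 0 < cg x"
  using CE_a[OF gm gnn g_integrable] CE_pos[OF gm gnn g_integrable gpos]
  unfolding cg_def by eventually_elim auto

lemma cg_pos: "AE x in PX. 0 < cg x" using cg_a by eventually_elim simp

lemma cg_int: "integrable PX cg"
  using CE_int[OF gm gnn g_integrable] unfolding cg_def by simp

lemma cg_integral: "(\<integral>x. cg x \<partial>PX) = 1"
  using CE_integral[OF gm gnn g_integrable] g_int unfolding cg_def by simp

lemma cg_d: "AE \<omega> in P. real_cond_exp P (sigX P MX) (\<lambda>\<omega>. g (snd \<omega>)) \<omega> = cg (fst \<omega>)"
  using CE_d[OF gm gnn g_integrable] unfolding cg_def by simp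

lemma h_int: "integrable PX h" and h_integral: "(\<integral>x. h x \<partial>PX) = 1"
  using h(1) unfolding prob_density_def by auto

lemma cn_int: "integrable PX (cn n)" and cn_integral: "(\<integral>x. cn n x \<partial>PX) = 1"
  using CE_int[OF gsm[OF IND_all[of n]] gs_nnAE[OF IND_all[of n]] gs_int[OF IND_all[of n]]]
    CE_integral[OF gsm[OF IND_all[of n]] gs_nnAE[OF IND_all[of n]] gs_int[OF IND_all[of n]]]
    gs_integral[OF IND_all[of n]]
  unfolding cn_def by auto

lemma hpos_sp: "x \<in> space MX \<Longrightarrow> 0 < h x" using h(2) by simp

context
  assumes Ig: "integrable PX (\<lambda>x. h x * ln (h x / cg x))"
begin

lemma LSC: "(\<integral>x. h x * ln (h x / cg x) \<partial>PX) \<le> (\<integral>x. h x * ln (h x / cn n x) \<partial>PX)"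
proof -
  define KLc where "KLc m = (\<integral>x. h x * ln (h x / cn m x) \<partial>PX)" for m
  define KLg where "KLg = (\<integral>x. h x * ln (h x / cg x) \<partial>PX)"
  define \<rho> where "\<rho> m x = h x * ln (h x / cn m x) - h x + cn m x" for m x
  define \<rho>g where "\<rho>g x = h x * ln (h x / cg x) - h x + cg x" for x
  have spX: "AE x in PX. x \<in> space MX" by (rule AE_I2) simp
  have \<rho>m[measurable]: "\<rho> m \<in> borel_measurable MX" for m unfolding \<rho>_def by measurable
  have \<rho>gm[measurable]: "\<rho>g \<in> borel_measurable MX" unfolding \<rho>g_def by measurable
  have \<rho>_int: "integrable PX (\<rho> m)" for m
    unfolding \<rho>_def by (intro Bochner_Integration.integrable_add Bochner_Integration.integrable_diff hlog_int h_int cn_int)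
  have \<rho>_integral: "(\<integral>x. \<rho> m x \<partial>PX) = KLc m" for m
    unfolding \<rho>_def KLc_def
    by (simp add: Bochner_Integration.integral_add Bochner_Integration.integral_diff hlog_int h_int cn_int
        Bochner_Integration.integrable_diff h_integral cn_integral)
  have \<rho>_nn: "AE x in PX. 0 \<le> \<rho> m x" for m
    using cn_aA[of m] spX by eventually_elim (simp add: \<rho>_def rho_nn hpos_sp)
  have \<rho>g_int: "integrable PX \<rho>g"
    unfolding \<rho>g_def by (intro Bochner_Integration.integrable_add Bochner_Integration.integrable_diff Ig h_int cg_int)
  have \<rho>g_integral: "(\<integral>x. \<rho>g x \<partial>PX) = KLg"
    unfolding \<rho>g_def KLg_def
    by (simp add: Bochner_Integration.integral_add Bochner_Integration.integral_diff Ig h_int cg_int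
        Bochner_Integration.integrable_diff h_integral cg_integral)
  have \<rho>g_nn: "AE x in PX. 0 \<le> \<rho>g x"
    using cg_pos spX by eventually_elim (simp add: \<rho>g_def rho_nn hpos_sp)
  have nn1: "(\<integral>\<^sup>+x. ennreal (\<rho> m x) \<partial>PX) = ennreal (KLc m)" for m
    using nn_integral_eq_integral[OF \<rho>_int \<rho>_nn] \<rho>_integral by simp
  have nn2: "(\<integral>\<^sup>+x. ennreal (\<rho>g x) \<partial>PX) = ennreal KLg"
    using nn_integral_eq_integral[OF \<rho>g_int \<rho>g_nn] \<rho>g_integral by simp
  have KLg_nn: "0 \<le> KLg" using integral_nonneg_AE[OF \<rho>g_nn] \<rho>g_integral by simp
  have KLc_nn: "0 \<le> KLc m" for m using integral_nonneg_AE[OF \<rho>_nn] \<rho>_integral by simp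
  have conv: "AE x in PX. (\<lambda>m. \<rho> m x) \<longlonglongrightarrow> \<rho>g x"
    using lim1 cg_pos spX
  proof eventually_elim
    case (elim x)
    have hx: "0 < h x" using elim(3) by (rule hpos_sp)
    have "(\<lambda>m. cn m x) \<longlonglongrightarrow> cg x" using elim(1) unfolding cn_def cg_def .
    then show ?case unfolding \<rho>_def \<rho>g_def
      by (intro tendsto_intros) (use hx elim(2) in auto)
  qed
  have "ennreal KLg = (\<integral>\<^sup>+x. ennreal (\<rho>g x) \<partial>PX)" using nn2 by simp
  also have "\<dots> = (\<integral>\<^sup>+x. liminf (\<lambda>m. ennreal (\<rho> m x)) \<partial>PX)"
  proof (rule nn_integral_cong_AE)
    show "AE x in PX. ennreal (\<rho>g x) = liminf (\<lambda>m. ennreal (\<rho> m x))"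
      using conv by eventually_elim (rule lim_imp_Liminf[symmetric], simp, rule tendsto_ennrealI)
  qed
  also have "\<dots> \<le> liminf (\<lambda>m. \<integral>\<^sup>+x. ennreal (\<rho> m x) \<partial>PX)"
    by (rule nn_integral_liminf) (simp add: measurable_cong_sets[OF sets_PX refl])
  also have "\<dots> = liminf (\<lambda>m. ennreal (KLc m))" by (simp add: nn1)
  also have "\<dots> \<le> limsup (\<lambda>m. ennreal (KLc m))" by (rule Liminf_le_Limsup) simp
  also have "\<dots> \<le> ennreal (KLc n)"
  proof (rule Limsup_bounded)
    show "\<forall>\<^sub>F m in sequentially. ennreal (KLc m) \<le> ennreal (KLc n)"
      unfolding eventually_sequentially KLc_def by (auto intro!: ennreal_leI KL_mono)
  qed
  finally have "ennreal KLg \<le> ennreal (KLc n)" .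
  then show ?thesis using KLc_nn[of n] unfolding KLg_def KLc_def by simp
qed

end

end


context EMloc
begin

interpretation Pp: prob_space P by (rule P(1))

definition Qh where "Qh = density P (\<lambda>\<omega>. ennreal (g (snd \<omega>)))"

lemma part_a: "prob_density PY g"
  unfolding prob_density_def using g_integrable gnn g_int by auto

lemma gY_int: "integrable P (\<lambda>\<omega>. g (snd \<omega>))"
  using g_integrable unfolding PY_def by (subst (asm) integrable_distr_eq) auto

lemma gY_nn: "AE \<omega> in P. 0 \<le> g (snd \<omega>)" by (rule AE_PY_P[OF gnn]) measurable
lemma gY_pos: "AE \<omega> in P. 0 < g (snd \<omega>)" by (rule AE_PY_P[OF gpos]) measurable

lemma sets_Qh[simp]: "sets Qh = sets P" unfolding Qh_def by simp
lemma space_Qh[simp]: "space Qh = space P" unfolding Qh_def by simp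

lemma emeasure_Qh_snd: "A \<in> sets MY \<Longrightarrow>
  emeasure Qh (snd -` A \<inter> space P) = (\<integral>\<^sup>+y. ennreal (g y) * indicator A y \<partial>PY)"
proof -
  assume A[measurable]: "A \<in> sets MY"
  have "emeasure Qh (snd -` A \<inter> space P) = (\<integral>\<^sup>+\<omega>. ennreal (g (snd \<omega>)) * indicator (snd -` A \<inter> space P) \<omega> \<partial>P)"
    unfolding Qh_def by (rule emeasure_density) measurable
  also have "\<dots> = (\<integral>\<^sup>+\<omega>. ennreal (g (snd \<omega>)) * indicator A (snd \<omega>) \<partial>P)"
    by (intro nn_integral_cong) (auto split: split_indicator)
  also have "\<dots> = (\<integral>\<^sup>+y. ennreal (g y) * indicator A y \<partial>PY)"
    unfolding PY_def by (subst nn_integral_distr) auto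
  finally show ?thesis .
qed

lemma part_b: "prob_space Qh"
proof (rule prob_spaceI)
  have "emeasure Qh (space Qh) = emeasure Qh (snd -` space MY \<inter> space P)"
    using spP by (auto intro!: arg_cong[where f="emeasure Qh"])
  also have "\<dots> = (\<integral>\<^sup>+y. ennreal (g y) * indicator (space MY) y \<partial>PY)"
    by (rule emeasure_Qh_snd) simp
  also have "\<dots> = (\<integral>\<^sup>+y. ennreal (g y) \<partial>PY)"
    by (intro nn_integral_cong) (auto split: split_indicator)
  also have "\<dots> = 1" using nn_integral_eq_integral[OF g_integrable gnn] g_int by simp
  finally show "emeasure Qh (space Qh) = 1" .
qed

lemma part_d: "distr Qh MY snd = density PY (\<lambda>y. ennreal (g y))"
proof (rule measure_eqI)
  show "sets (distr Qh MY snd) = sets (density PY (\<lambda>y. ennreal (g y)))" by (simp add: sets_PY)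
next
  fix A assume "A \<in> sets (distr Qh MY snd)"
  then have A[measurable]: "A \<in> sets MY" by simp
  have sm: "snd \<in> Qh \<rightarrow>\<^sub>M MY" by (simp add: measurable_cong_sets[OF sets_Qh refl])
  have "emeasure (distr Qh MY snd) A = emeasure Qh (snd -` A \<inter> space P)"
    by (subst emeasure_distr[OF sm A]) simp
  also have "\<dots> = (\<integral>\<^sup>+y. ennreal (g y) * indicator A y \<partial>PY)" by (rule emeasure_Qh_snd[OF A])
  also have "\<dots> = emeasure (density PY (\<lambda>y. ennreal (g y))) A"
    by (rule emeasure_density[symmetric]) (auto simp: measurable_cong_sets[OF sets_PY refl])
  finally show "emeasure (distr Qh MY snd) A = emeasure (density PY (\<lambda>y. ennreal (g y))) A" .
qed

lemma sigY_Qh: "sigY Qh MY = sigY P MY" unfolding sigY_def by simp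

lemma part_c: "label_shift MX MY P Qh"
  unfolding label_shift_def
proof
  fix H assume H[measurable]: "H \<in> sets MX"
  define Z where "Z = (indicator (H \<times> space MY) :: 'a \<times> 'b \<Rightarrow> real)"
  have Zm[measurable]: "Z \<in> borel_measurable P"
  proof -
    have "H \<times> space MY \<in> sets (MX \<Otimes>\<^sub>M MY)" by auto
    then show ?thesis unfolding Z_def using P(2) by simp
  qed
  interpret Fp: sigma_finite_subalgebra P "sigY P MY" by (rule sfY)
  interpret Qp: prob_space Qh by (rule part_b)
  have sQ: "snd \<in> Qh \<rightarrow>\<^sub>M MY" by (simp add: measurable_cong_sets[OF sets_Qh refl])
  interpret Fq: sigma_finite_subalgebra Qh "sigY Qh MY"
    unfolding sigY_def by (rule sfs_vimage[OF part_b sQ])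
  define R where "R = real_cond_exp P (sigY P MY) Z"
  have Rm: "R \<in> borel_measurable (sigY P MY)" unfolding R_def by simp
  have RmP[measurable]: "R \<in> borel_measurable P" unfolding R_def
    by (rule measurable_from_subalg[OF Fp.subalg]) simp
  have gYF: "(\<lambda>\<omega>. g (snd \<omega>)) \<in> borel_measurable (sigY P MY)"
    unfolding sigY_def
    using measurable_comp[OF measurable_vimage_algebra1[of snd "space P" MY] gm]
    using measurable_space[OF sndm] by (auto simp: comp_def)
  have Zb: "\<omega> \<in> space P \<Longrightarrow> norm (Z \<omega>) \<le> 1" for \<omega> unfolding Z_def by (simp split: split_indicator)
  have gZm: "(\<lambda>\<omega>. g (snd \<omega>) * Z \<omega>) \<in> borel_measurable P" by measurable
  have gZ_int: "integrable P (\<lambda>\<omega>. g (snd \<omega>) * Z \<omega>)"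
    by (rule Bochner_Integration.integrable_bound[OF gY_int gZm])
       (auto simp: Z_def abs_mult split: split_indicator intro!: AE_I2)
  have gR_int: "integrable P (\<lambda>\<omega>. g (snd \<omega>) * R \<omega>)"
    unfolding R_def by (rule Fp.real_cond_exp_intg(1)[OF gZ_int gYF Zm])
  have dens_m: "(\<lambda>\<omega>. g (snd \<omega>)) \<in> borel_measurable P" by measurable
  have AEQ: "AE \<omega> in Qh. real_cond_exp Qh (sigY Qh MY) Z \<omega> = R \<omega>"
  proof (rule Fq.real_cond_exp_charact)
    show "integrable Qh Z" unfolding Qh_def
      by (subst integrable_density[OF _ dens_m gY_nn]) (use gZ_int in simp_all)
    show "integrable Qh R" unfolding Qh_def
      by (subst integrable_density[OF _ dens_m gY_nn]) (use gR_int in simp_all)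
    show "R \<in> borel_measurable (sigY Qh MY)" using Rm sigY_Qh by simp
  next
    fix A assume "A \<in> sets (sigY Qh MY)"
    then have AF: "A \<in> sets (sigY P MY)" using sigY_Qh by simp
    then have AP[measurable]: "A \<in> sets P" using Fp.subalg by (auto simp: subalgebra_def)
    have iAF: "(\<lambda>\<omega>. indicator A \<omega> * g (snd \<omega>)) \<in> borel_measurable (sigY P MY)"
      using AF gYF by (intro borel_measurable_times borel_measurable_indicator) auto
    have iZm: "(\<lambda>\<omega>. indicator A \<omega> * g (snd \<omega>) * Z \<omega>) \<in> borel_measurable P" by measurable
    have iint: "integrable P (\<lambda>\<omega>. indicator A \<omega> * g (snd \<omega>) * Z \<omega>)"
      by (rule Bochner_Integration.integrable_bound[OF gY_int iZm])
         (auto simp: Z_def abs_mult split: split_indicator intro!: AE_I2)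
    have "(\<integral>\<omega>\<in>A. Z \<omega> \<partial>Qh) = (\<integral>\<omega>. g (snd \<omega>) * (indicator A \<omega> * Z \<omega>) \<partial>P)"
      unfolding set_lebesgue_integral_def Qh_def by (subst integral_density[OF _ dens_m gY_nn]) simp_all
    also have "\<dots> = (\<integral>\<omega>. indicator A \<omega> * g (snd \<omega>) * Z \<omega> \<partial>P)" by (simp add: ac_simps)
    also have "\<dots> = (\<integral>\<omega>. indicator A \<omega> * g (snd \<omega>) * R \<omega> \<partial>P)"
      unfolding R_def by (rule Fp.real_cond_exp_intg(2)[OF iint iAF Zm, symmetric])
    also have "\<dots> = (\<integral>\<omega>. g (snd \<omega>) * (indicator A \<omega> * R \<omega>) \<partial>P)" by (simp add: ac_simps)
    also have "\<dots> = (\<integral>\<omega>\<in>A. R \<omega> \<partial>Qh)"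
      unfolding set_lebesgue_integral_def Qh_def by (subst integral_density[OF _ dens_m gY_nn]) simp_all
    finally show "(\<integral>\<omega>\<in>A. Z \<omega> \<partial>Qh) = (\<integral>\<omega>\<in>A. R \<omega> \<partial>Qh)" .
  qed
  have "AE \<omega> in P. 0 < ennreal (g (snd \<omega>)) \<longrightarrow> real_cond_exp Qh (sigY Qh MY) Z \<omega> = R \<omega>"
    using AEQ unfolding Qh_def by (subst (asm) AE_density) simp_all
  with gY_pos show "AE \<omega> in P. real_cond_exp P (sigY P MY) (indicator (H \<times> space MY)) \<omega> =
      real_cond_exp Qh (sigY Qh MY) (indicator (H \<times> space MY)) \<omega>"
    unfolding Z_def[symmetric] R_def[symmetric] by eventually_elim simp
qed

lemma part_e:
  assumes hhm: "hh \<in> borel_measurable MX"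
    and hhce: "AE \<omega> in P. real_cond_exp P (sigX P MX) (\<lambda>\<omega>. g (snd \<omega>)) \<omega> = hh (fst \<omega>)"
    and hhi: "integrable PX (\<lambda>x. h x * \<bar>ln (h x / hh x)\<bar>)"
  shows "KL_wd PX h hh \<and> (\<forall>n. KL PX h hh \<le> KL PX h (hn n))"
proof -
  note [measurable] = hhm
  have "AE \<omega> in P. hh (fst \<omega>) = cg (fst \<omega>)" using hhce cg_d by eventually_elim simp
  then have hheq: "AE x in PX. hh x = cg x" by (rule AE_P_PX) measurable
  have hhmPX: "hh \<in> borel_measurable PX" by (simp add: measurable_cong_sets[OF sets_PX refl])
  have cgmPX: "cg \<in> borel_measurable PX" by (simp add: measurable_cong_sets[OF sets_PX refl])
  have hh_int: "integrable PX hh" using integrable_cong_AE[OF hhmPX cgmPX hheq] cg_int by simp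
  have hh_integral: "(\<integral>x. hh x \<partial>PX) = 1" using integral_cong_AE[OF hhmPX cgmPX hheq] cg_integral by simp
  have hh_pos: "AE x in PX. 0 < hh x" using hheq cg_pos by eventually_elim simp
  have spX: "AE x in PX. x \<in> space MX" by (rule AE_I2) simp
  have pd: "prob_density PX hh"
    unfolding prob_density_def using hhmPX hh_int hh_integral hh_pos
    by (auto elim: eventually_mono)
  have pos2: "AE x in PX. 0 < h x \<and> 0 < hh x" using hh_pos spX by eventually_elim (simp add: hpos_sp)
  have wd: "KL_wd PX h hh" unfolding KL_wd_def using h(1) pd pos2 hhi by simp
  have i1: "integrable PX (\<lambda>x. h x * ln (h x / hh x))"
    by (rule Bochner_Integration.integrable_bound[OF hhi])
       (auto simp: measurable_cong_sets[OF sets_PX refl] abs_mult intro!: AE_I2)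
  have eqf: "AE x in PX. h x * ln (h x / hh x) = h x * ln (h x / cg x)" using hheq by eventually_elim simp
  have Ig: "integrable PX (\<lambda>x. h x * ln (h x / cg x))"
    using integrable_cong_AE[of "\<lambda>x. h x * ln (h x / hh x)" PX "\<lambda>x. h x * ln (h x / cg x)"] eqf i1
    by (simp add: measurable_cong_sets[OF sets_PX refl])
  have KLhh: "KL PX h hh = (\<integral>x. h x * ln (h x / cg x) \<partial>PX)"
    unfolding KL_def by (rule integral_cong_AE[OF _ _ eqf]) (simp_all add: measurable_cong_sets[OF sets_PX refl])
  have "\<forall>n. KL PX h hh \<le> KL PX h (hn n)"
    unfolding KLhh KL_eq using LSC[OF Ig] by simp
  with wd show ?thesis by simp
qed

end


context EMloc
begin

interpretation Pp: prob_space P by (rule P(1))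

lemma PY_P: "AE y in PY. Q y \<Longrightarrow> AE \<omega> in P. Q (snd \<omega>)"
  unfolding PY_def by (rule AE_distrD[OF sndm])
lemma PX_P: "AE x in PX. Q x \<Longrightarrow> AE \<omega> in P. Q (fst \<omega>)"
  unfolding PX_def by (rule AE_distrD[OF fstm])

lemma F1: "AE y in PY. g y = (\<integral>x. q x y * h x \<partial>KXY y)"
proof -
  have spY: "AE y in PY. y \<in> space MY" by (rule AE_I2) simp
  from g_lim lim2 spY show ?thesis
  proof eventually_elim
    case (elim y)
    have "(\<lambda>n. gs (Suc n) y) \<longlonglongrightarrow> g y" using elim(1) LIMSEQ_Suc by blast
    moreover have "(\<lambda>n. gs (Suc n) y) = (\<lambda>n. \<integral>x. EM_q KYX gs n x y * h x \<partial>KXY y)"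
      using rec elim(3) by simp
    ultimately show ?case using elim(2) LIMSEQ_unique by metis
  qed
qed

lemma F2: "AE \<omega> in P. q (fst \<omega>) (snd \<omega>) = g (snd \<omega>) / cg (fst \<omega>)"
proof -
  have a1: "AE \<omega> in P. (\<lambda>n. gs n (snd \<omega>)) \<longlonglongrightarrow> g (snd \<omega>)"
    using PY_P[OF g_lim] by eventually_elim simp
  have a2: "AE \<omega> in P. (\<lambda>n. cn n (fst \<omega>)) \<longlonglongrightarrow> cg (fst \<omega>)"
    using PX_P[OF lim1] unfolding cn_def cg_def by simp
  have a3: "AE \<omega> in P. 0 < cg (fst \<omega>)" using PX_P[OF cg_pos] .
  from q_lim a1 a2 a3 show ?thesis
  proof eventually_elim
    case (elim \<omega>)
    have "(\<lambda>n. EM_q KYX gs n (fst \<omega>) (snd \<omega>)) \<longlonglongrightarrow> g (snd \<omega>) / cg (fst \<omega>)"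
      unfolding EM_q_def cn_def[symmetric] using elim(2,3,4) by (intro tendsto_intros) auto
    then show ?case using elim(1) LIMSEQ_unique by blast
  qed
qed

lemma cg_posKXY: "AE y in PY. AE x in KXY y. 0 < cg x"
  using disY_AE[of "\<lambda>\<omega>. 0 < cg (fst \<omega>)", OF PX_P[OF cg_pos]] by simp

lemma part_f: "AE y in PY. 1 = (\<integral>x. h x / cg x \<partial>KXY y)"
proof -
  have F3: "AE y in PY. AE x in KXY y. q x y = g y / cg x"
    using disY_AE[of "\<lambda>\<omega>. q (fst \<omega>) (snd \<omega>) = g (snd \<omega>) / cg (fst \<omega>)", OF F2] by simp
  have spY: "AE y in PY. y \<in> space MY" by (rule AE_I2) simp
  from F1 F3 gpos spY show ?thesis
  proof eventually_elim
    case (elim y)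
    have "integrable (KXY y) (\<lambda>x. q x y * h x)"
      using elim(1,3) not_integrable_integral_eq by fastforce
    then have qm: "(\<lambda>x. q x y * h x) \<in> borel_measurable (KXY y)" by (rule borel_measurable_integrable)
    have gm2: "(\<lambda>x. g y * (h x / cg x)) \<in> borel_measurable (KXY y)"
      using elim(4) by (intro measKXY) auto
    have "g y = (\<integral>x. q x y * h x \<partial>KXY y)" by (rule elim(1))
    also have "\<dots> = (\<integral>x. g y * (h x / cg x) \<partial>KXY y)"
      by (rule integral_cong_AE[OF qm gm2]) (use elim(2) in \<open>auto elim: eventually_mono\<close>)
    also have "\<dots> = g y * (\<integral>x. h x / cg x \<partial>KXY y)" by (rule integral_mult_right_zero)
    finally show ?case using elim(3) by simp
  qed
qed

definition fQ where "fQ \<omega> = g (snd \<omega>) * h (fst \<omega>) / cg (fst \<omega>)"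

lemma fQm[measurable]: "fQ \<in> borel_measurable P" unfolding fQ_def by measurable

lemma fQ_nn: "AE \<omega> in P. 0 \<le> fQ \<omega>"
proof -
  have a3: "AE \<omega> in P. \<omega> \<in> space P" by (rule AE_I2) simp
  from gY_nn PX_P[OF cg_pos] a3 show ?thesis
  proof eventually_elim
    case (elim \<omega>)
    then have "0 < h (fst \<omega>)" using spP hpos_sp by auto
    then show ?case unfolding fQ_def using elim by (auto intro!: divide_nonneg_pos mult_nonneg_nonneg)
  qed
qed

lemma WQ: "F \<in> borel_measurable MX \<Longrightarrow> \<forall>x\<in>space MX. 0 \<le> F x \<Longrightarrow>
  (\<integral>\<^sup>+\<omega>. ennreal (fQ \<omega> * F (fst \<omega>)) \<partial>P) = (\<integral>\<^sup>+x. ennreal (h x * F x) \<partial>PX)"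
  using W[OF gm cgm cg_a, of F] unfolding fQ_def by (simp add: ac_simps)

lemma fQ_one: "(\<integral>\<^sup>+\<omega>. ennreal (fQ \<omega>) \<partial>P) = 1"
  using WQ[of "\<lambda>_. 1"] h_one by simp

lemma part_g1: "prob_density P fQ"
proof -
  have "integrable P fQ \<and> integral\<^sup>L P fQ = 1"
    using nn_integral_eq_integrable[OF fQm fQ_nn, of 1] fQ_one by simp
  then show ?thesis unfolding prob_density_def using fQ_nn by simp
qed

definition Q where "Q = density P (\<lambda>\<omega>. ennreal (fQ \<omega>))"

lemma sets_Q[simp]: "sets Q = sets P" unfolding Q_def by simp
lemma space_Q[simp]: "space Q = space P" unfolding Q_def by simp

lemma part_g2: "prob_space Q"
proof (rule prob_spaceI)
  have "emeasure Q (space Q) = (\<integral>\<^sup>+\<omega>. ennreal (fQ \<omega>) * indicator (space P) \<omega> \<partial>P)"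
    unfolding Q_def by (subst emeasure_density) auto
  also have "\<dots> = (\<integral>\<^sup>+\<omega>. ennreal (fQ \<omega>) \<partial>P)"
    by (intro nn_integral_cong) (auto split: split_indicator)
  finally show "emeasure Q (space Q) = 1" using fQ_one by simp
qed

lemma part_g3: "FJS MX MY P Q"
  unfolding FJS_def
proof (intro exI conjI)
  let ?hb = "\<lambda>x. max 0 (h x / cg x)" and ?gb = "\<lambda>y. max 0 (g y)"
  show "?hb \<in> borel_measurable MX" "?gb \<in> borel_measurable MY" by measurable
  show "\<forall>x\<in>space MX. 0 \<le> ?hb x" "\<forall>y\<in>space MY. 0 \<le> ?gb y" by auto
  show "Q = density P (\<lambda>\<omega>. ennreal (?hb (fst \<omega>) * ?gb (snd \<omega>)))"
    unfolding Q_def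
  proof (rule density_cong)
    show "(\<lambda>\<omega>. ennreal (fQ \<omega>)) \<in> borel_measurable P" by measurable
    show "(\<lambda>\<omega>. ennreal (?hb (fst \<omega>) * ?gb (snd \<omega>))) \<in> borel_measurable P" by measurable
    have a3: "AE \<omega> in P. \<omega> \<in> space P" by (rule AE_I2) simp
    from gY_pos PX_P[OF cg_pos] a3
    show "AE \<omega> in P. ennreal (fQ \<omega>) = ennreal (?hb (fst \<omega>) * ?gb (snd \<omega>))"
    proof eventually_elim
      case (elim \<omega>)
      then have "0 < h (fst \<omega>)" using spP hpos_sp by auto
      then show ?case unfolding fQ_def using elim by (simp add: max_def field_simps)
    qed
  qed
qed

lemma part_g4: "distr Q MX fst = density PX (\<lambda>x. ennreal (h x))"
proof (rule measure_eqI)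
  show "sets (distr Q MX fst) = sets (density PX (\<lambda>x. ennreal (h x)))" by (simp add: sets_PX)
next
  fix A assume "A \<in> sets (distr Q MX fst)"
  then have A[measurable]: "A \<in> sets MX" by simp
  have fm: "fst \<in> Q \<rightarrow>\<^sub>M MX" by (simp add: measurable_cong_sets[OF sets_Q refl])
  have "emeasure (distr Q MX fst) A = emeasure Q (fst -` A \<inter> space P)"
    by (subst emeasure_distr[OF fm A]) simp
  also have "\<dots> = (\<integral>\<^sup>+\<omega>. ennreal (fQ \<omega>) * indicator (fst -` A \<inter> space P) \<omega> \<partial>P)"
    unfolding Q_def by (rule emeasure_density) measurable
  also have "\<dots> = (\<integral>\<^sup>+\<omega>. ennreal (fQ \<omega> * indicator A (fst \<omega>)) \<partial>P)"
    by (intro nn_integral_cong) (auto split: split_indicator)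
  also have "\<dots> = (\<integral>\<^sup>+x. ennreal (h x * indicator A x) \<partial>PX)"
    by (rule WQ) auto
  also have "\<dots> = (\<integral>\<^sup>+x. ennreal (h x) * indicator A x \<partial>PX)"
    by (intro nn_integral_cong) (auto split: split_indicator)
  also have "\<dots> = emeasure (density PX (\<lambda>x. ennreal (h x))) A"
    by (rule emeasure_density[symmetric]) (auto simp: measurable_cong_sets[OF sets_PX refl])
  finally show "emeasure (distr Q MX fst) A = emeasure (density PX (\<lambda>x. ennreal (h x))) A" .
qed

lemma hcg_one: "AE y in PY. (\<integral>\<^sup>+x. ennreal (h x / cg x) \<partial>KXY y) = 1"
proof -
  have spY: "AE y in PY. y \<in> space MY" by (rule AE_I2) simp
  from part_f cg_posKXY spY show ?thesis
  proof eventually_elim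
    case (elim y)
    have i: "integrable (KXY y) (\<lambda>x. h x / cg x)"
      using elim(1) not_integrable_integral_eq by fastforce
    have nn: "AE x in KXY y. 0 \<le> h x / cg x"
      using elim(2) AE_space
    proof eventually_elim
      case (elim x)
      then have "x \<in> space MX" using KXY_space \<open>y \<in> space MY\<close> by simp
      then show ?case using elim hpos_sp by (auto intro!: divide_nonneg_pos less_imp_le)
    qed
    show ?case using nn_integral_eq_integral[OF i nn] elim(1) by simp
  qed
qed

lemma part_g5: "distr Q MY snd = density PY (\<lambda>y. ennreal (g y))"
proof (rule measure_eqI)
  show "sets (distr Q MY snd) = sets (density PY (\<lambda>y. ennreal (g y)))" by (simp add: sets_PY)
next
  fix A assume "A \<in> sets (distr Q MY snd)"
  then have A[measurable]: "A \<in> sets MY" by simp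
  have sm: "snd \<in> Q \<rightarrow>\<^sub>M MY" by (simp add: measurable_cong_sets[OF sets_Q refl])
  have mm: "(\<lambda>\<omega>. ennreal (fQ \<omega> * indicator A (snd \<omega>))) \<in> borel_measurable (MX \<Otimes>\<^sub>M MY)"
    unfolding fQ_def by measurable
  have "emeasure (distr Q MY snd) A = emeasure Q (snd -` A \<inter> space P)"
    by (subst emeasure_distr[OF sm A]) simp
  also have "\<dots> = (\<integral>\<^sup>+\<omega>. ennreal (fQ \<omega>) * indicator (snd -` A \<inter> space P) \<omega> \<partial>P)"
    unfolding Q_def by (rule emeasure_density) measurable
  also have "\<dots> = (\<integral>\<^sup>+\<omega>. ennreal (fQ \<omega> * indicator A (snd \<omega>)) \<partial>P)"
    by (intro nn_integral_cong) (auto split: split_indicator)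
  also have "\<dots> = (\<integral>\<^sup>+y. \<integral>\<^sup>+x. ennreal (g y * h x / cg x * indicator A y) \<partial>KXY y \<partial>PY)"
    using disY_nn[OF mm] unfolding fQ_def by simp
  also have "\<dots> = (\<integral>\<^sup>+y. ennreal (g y) * indicator A y \<partial>PY)"
  proof (rule nn_integral_cong_AE)
    have spY: "AE y in PY. y \<in> space MY" by (rule AE_I2) simp
    from gpos hcg_one spY
    show "AE y in PY. (\<integral>\<^sup>+x. ennreal (g y * h x / cg x * indicator A y) \<partial>KXY y) = ennreal (g y) * indicator A y"
    proof eventually_elim
      case (elim y)
      have nn: "0 \<le> g y * indicator A y" using elim by simp
      have "(\<integral>\<^sup>+x. ennreal (g y * h x / cg x * indicator A y) \<partial>KXY y)
          = (\<integral>\<^sup>+x. ennreal (g y * indicator A y) * ennreal (h x / cg x) \<partial>KXY y)"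
      proof (rule nn_integral_cong)
        fix x
        have e: "g y * h x / cg x * indicator A y = (g y * indicator A y) * (h x / cg x)" by simp
        show "ennreal (g y * h x / cg x * indicator A y) = ennreal (g y * indicator A y) * ennreal (h x / cg x)"
          unfolding e by (rule ennreal_mult'[OF nn])
      qed
      also have "\<dots> = ennreal (g y * indicator A y) * (\<integral>\<^sup>+x. ennreal (h x / cg x) \<partial>KXY y)"
        using elim by (intro nn_integral_cmult measKXY) auto
      also have "\<dots> = ennreal (g y) * indicator A y"
        using elim by (simp split: split_indicator)
      finally show ?case .
    qed
  qed
  also have "\<dots> = emeasure (density PY (\<lambda>y. ennreal (g y))) A"
    by (rule emeasure_density[symmetric]) (auto simp: measurable_cong_sets[OF sets_PY refl])
  finally show "emeasure (distr Q MY snd) A = emeasure (density PY (\<lambda>y. ennreal (g y))) A" .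
qed

end

theorem proposition5:
  fixes MX :: "'a measure" and MY :: "'b measure" and P :: "('a \<times> 'b) measure"
    and KYX :: "'a \<Rightarrow> 'b measure" and KXY :: "'b \<Rightarrow> 'a measure"
    and h :: "'a \<Rightarrow> real" and gs :: "nat \<Rightarrow> 'b \<Rightarrow> real" and hn :: "nat \<Rightarrow> 'a \<Rightarrow> real"
    and g :: "'b \<Rightarrow> real" and q :: "'a \<Rightarrow> 'b \<Rightarrow> real"
  defines "PX \<equiv> distr P MX fst" and "PY \<equiv> distr P MY snd"
  assumes P: "prob_space P" "sets P = sets (MX \<Otimes>\<^sub>M MY)"
    and KYX: "reg_cond_YX MX MY P KYX"
    and KXY: "reg_cond_XY MX MY P KXY"
    and h: "prob_density PX h" "\<forall>x\<in>space MX. 0 < h x"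
    and g0: "prob_density PY (gs 0)" "\<forall>y\<in>space MY. 0 < gs 0 y"
    and rec: "\<forall>n. \<forall>y\<in>space MY.
               gs (Suc n) y = (\<integral>x. EM_q KYX gs n x y * h x \<partial>KXY y)"
    and hn: "\<forall>n. hn n \<in> borel_measurable MX \<and>
               (AE \<omega> in P. real_cond_exp P (sigX P MX) (\<lambda>\<omega>. gs n (snd \<omega>)) \<omega> = hn n (fst \<omega>))"
    and KL_fin: "\<forall>n. integrable PX (\<lambda>x. h x * \<bar>ln (h x / hn n x)\<bar>)"
    and g_lim: "AE y in PY. (\<lambda>n. gs n y) \<longlonglongrightarrow> g y \<and> 0 < g y"
    and q_lim: "AE \<omega> in P. (\<lambda>n. EM_q KYX gs n (fst \<omega>) (snd \<omega>)) \<longlonglongrightarrow> q (fst \<omega>) (snd \<omega>)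
                  \<and> 0 < q (fst \<omega>) (snd \<omega>)"
    and g_int: "(\<integral>y. g y \<partial>PY) = 1"
    and lim1: "AE x in PX. (\<lambda>n. \<integral>z. gs n z \<partial>KYX x) \<longlonglongrightarrow> (\<integral>z. g z \<partial>KYX x)"
    and lim2: "AE y in PY. (\<lambda>n. \<integral>x. EM_q KYX gs n x y * h x \<partial>KXY y)
                             \<longlonglongrightarrow> (\<integral>x. q x y * h x \<partial>KXY y)"
  shows
    "(prob_density PY g \<and>
     prob_space (density P (\<lambda>\<omega>. ennreal (g (snd \<omega>)))) \<and>
     label_shift MX MY P (density P (\<lambda>\<omega>. ennreal (g (snd \<omega>)))) \<and>
     distr (density P (\<lambda>\<omega>. ennreal (g (snd \<omega>)))) MY snd = density PY (\<lambda>y. ennreal (g y)) \<and>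
     (\<forall>hh. hh \<in> borel_measurable MX \<and>
            (AE \<omega> in P. real_cond_exp P (sigX P MX) (\<lambda>\<omega>. g (snd \<omega>)) \<omega> = hh (fst \<omega>)) \<and>
            integrable PX (\<lambda>x. h x * \<bar>ln (h x / hh x)\<bar>) \<longrightarrow>
          KL_wd PX h hh \<and> (\<forall>n. KL PX h hh \<le> KL PX h (hn n))))
     \<and> ((AE y in PY. 1 = (\<integral>x. h x / (\<integral>z. g z \<partial>KYX x) \<partial>KXY y)) \<and>
     (let f = (\<lambda>\<omega>. g (snd \<omega>) * h (fst \<omega>) / (\<integral>z. g z \<partial>KYX (fst \<omega>)));
          Q = density P (\<lambda>\<omega>. ennreal (f \<omega>))
      in prob_density P f \<and> prob_space Q \<and> FJS MX MY P Q \<and>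
         distr Q MX fst = density PX (\<lambda>x. ennreal (h x)) \<and>
         distr Q MY snd = density PY (\<lambda>y. ennreal (g y))))"
proof -
  interpret E: EMloc MX MY P KYX KXY h gs hn g q PX PY
    by (rule EMloc.intro) (use assms in \<open>simp_all add: PX_def PY_def\<close>)
  have fe: "(\<lambda>\<omega>. g (snd \<omega>) * h (fst \<omega>) / (\<integral>z. g z \<partial>KYX (fst \<omega>))) = E.fQ"
    by (simp add: E.fQ_def E.cg_def fun_eq_iff)
  have i: "prob_density PY g \<and>
     prob_space (density P (\<lambda>\<omega>. ennreal (g (snd \<omega>)))) \<and>
     label_shift MX MY P (density P (\<lambda>\<omega>. ennreal (g (snd \<omega>)))) \<and>
     distr (density P (\<lambda>\<omega>. ennreal (g (snd \<omega>)))) MY snd = density PY (\<lambda>y. ennreal (g y)) \<and>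
     (\<forall>hh. hh \<in> borel_measurable MX \<and>
            (AE \<omega> in P. real_cond_exp P (sigX P MX) (\<lambda>\<omega>. g (snd \<omega>)) \<omega> = hh (fst \<omega>)) \<and>
            integrable PX (\<lambda>x. h x * \<bar>ln (h x / hh x)\<bar>) \<longrightarrow>
          KL_wd PX h hh \<and> (\<forall>n. KL PX h hh \<le> KL PX h (hn n)))"
    using E.part_a E.part_b E.part_c E.part_d E.part_e unfolding E.Qh_def by blast
  have ii: "AE y in PY. 1 = (\<integral>x. h x / (\<integral>z. g z \<partial>KYX x) \<partial>KXY y)"
    using E.part_f unfolding E.cg_def .
  have iii: "prob_density P E.fQ \<and> prob_space E.Q \<and> FJS MX MY P E.Q \<and>
         distr E.Q MX fst = density PX (\<lambda>x. ennreal (h x)) \<and>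
         distr E.Q MY snd = density PY (\<lambda>y. ennreal (g y))"
    using E.part_g1 E.part_g2 E.part_g3 E.part_g4 E.part_g5 by blast
  show ?thesis
    unfolding Let_def fe using i ii iii unfolding E.Q_def by blast
qed

end
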